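(* For each odd prime $p$ and each $\epsilon>0$ there is $\delta>0$ such that for every $n$, every set $A\subseteq\mathbb{F}_p^n$ satisfying property $\mathcal{R}(\delta)$ also satisfies property $\mathcal{P}(\epsilon)$.
   Context: Let $N=p^n$ and identify $A\subseteq\mathbb{F}_p^n$ with its indicator function. Property $\mathcal{P}(\epsilon)$: for every affine subspace $H\subseteq\mathbb{F}_p^n$, $\big||A\cap H|-|A||H|/N\big|\le\epsilon N$. Property $\mathcal{R}(\delta)$: for every (linear) subspace $H\subseteq\mathbb{F}_p^n$, $\sum_{x\in\mathbb{F}_p^n,\,d\in H}A(x)A(x+d)A(x+2d)\le |A|^3|H|/N^2+\delta N^2$. *)

theory Defs
  imports "HOL-Analysis.Analysis"
begin

text \<open>F_p^n is modelled as functions nat => nat with coordinates i < n in {0..<p}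
  and all coordinates i >= n equal to 0; arithmetic is coordinatewise mod p.\<close>

definition Fpn :: "nat \<Rightarrow> nat \<Rightarrow> (nat \<Rightarrow> nat) set" where
  "Fpn p n = {x. (\<forall>i<n. x i < p) \<and> (\<forall>i\<ge>n. x i = 0)}"

definition vzero :: "nat \<Rightarrow> nat" where
  "vzero = (\<lambda>i. 0)"

definition vadd :: "nat \<Rightarrow> (nat \<Rightarrow> nat) \<Rightarrow> (nat \<Rightarrow> nat) \<Rightarrow> (nat \<Rightarrow> nat)" where
  "vadd p x y = (\<lambda>i. (x i + y i) mod p)"

definition vsmult :: "nat \<Rightarrow> nat \<Rightarrow> (nat \<Rightarrow> nat) \<Rightarrow> (nat \<Rightarrow> nat)" where
  "vsmult p c x = (\<lambda>i. (c * x i) mod p)"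

definition linear_subspace :: "nat \<Rightarrow> nat \<Rightarrow> (nat \<Rightarrow> nat) set \<Rightarrow> bool" where
  "linear_subspace p n H \<longleftrightarrow>
     H \<subseteq> Fpn p n \<and> vzero \<in> H \<and>
     (\<forall>x\<in>H. \<forall>y\<in>H. vadd p x y \<in> H) \<and>
     (\<forall>c<p. \<forall>x\<in>H. vsmult p c x \<in> H)"

definition affine_subspace :: "nat \<Rightarrow> nat \<Rightarrow> (nat \<Rightarrow> nat) set \<Rightarrow> bool" where
  "affine_subspace p n S \<longleftrightarrow>
     (\<exists>a\<in>Fpn p n. \<exists>H. linear_subspace p n H \<and> S = vadd p a ` H)"

definition propP :: "nat \<Rightarrow> nat \<Rightarrow> real \<Rightarrow> (nat \<Rightarrow> nat) set \<Rightarrow> bool" where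
  "propP p n \<epsilon> A \<longleftrightarrow>
     (\<forall>S. affine_subspace p n S \<longrightarrow>
        \<bar>real (card (A \<inter> S)) - real (card A) * real (card S) / real (p ^ n)\<bar>
          \<le> \<epsilon> * real (p ^ n))"

definition propR :: "nat \<Rightarrow> nat \<Rightarrow> real \<Rightarrow> (nat \<Rightarrow> nat) set \<Rightarrow> bool" where
  "propR p n \<delta> A \<longleftrightarrow>
     (\<forall>H. linear_subspace p n H \<longrightarrow>
        (\<Sum>x\<in>Fpn p n. \<Sum>d\<in>H.
            of_bool (x \<in> A) * of_bool (vadd p x d \<in> A)
              * of_bool (vadd p x (vsmult p 2 d) \<in> A) :: real)
          \<le> real (card A) ^ 3 * real (card H) / real (p ^ n) ^ 2
             + \<delta> * real (p ^ n) ^ 2)"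

end

theory Submission
  imports Defs "HOL-Number_Theory.Cong"
begin


definition vneg :: "nat \<Rightarrow> (nat \<Rightarrow> nat) \<Rightarrow> (nat \<Rightarrow> nat)" where
  "vneg p x = vsmult p (p - 1) x"

definition dotp :: "nat \<Rightarrow> (nat \<Rightarrow> nat) \<Rightarrow> (nat \<Rightarrow> nat) \<Rightarrow> nat" where
  "dotp n u x = (\<Sum>i<n. u i * x i)"

lemma Fpn_iff: "x \<in> Fpn p n \<longleftrightarrow> (\<forall>i<n. x i < p) \<and> (\<forall>i\<ge>n. x i = 0)"
  by (simp add: Fpn_def)

lemma Fpn_0: "Fpn p 0 = {vzero}"
  by (auto simp: Fpn_def vzero_def)

lemma Fpn_Suc: "Fpn p (Suc n) = (\<lambda>(x,t). x(n:=t)) ` (Fpn p n \<times> {..<p})"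
proof (intro set_eqI iffI)
  fix x assume x: "x \<in> Fpn p (Suc n)"
  have "x = (\<lambda>(y,t). y(n:=t)) (x(n:=0), x n)" by auto
  moreover have "(x(n:=0), x n) \<in> Fpn p n \<times> {..<p}"
    using x by (auto simp: Fpn_def)
  ultimately show "x \<in> (\<lambda>(x,t). x(n:=t)) ` (Fpn p n \<times> {..<p})" by blast
next
  fix x assume "x \<in> (\<lambda>(x,t). x(n:=t)) ` (Fpn p n \<times> {..<p})"
  then show "x \<in> Fpn p (Suc n)" by (auto simp: Fpn_def less_Suc_eq)
qed

lemma Fpn_Suc_inj: "inj_on (\<lambda>(x,t). x(n:=t)) (Fpn p n \<times> {..<p})"
proof (rule inj_onI, clarify)
  fix x t y s assume "x \<in> Fpn p n" "y \<in> Fpn p n" "x(n := t) = y(n := s)"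
  then show "x = y \<and> t = s"
    by (metis Fpn_iff fun_upd_idem_iff fun_upd_same fun_upd_upd order_refl)
qed

lemma Fpn_finite_card: "finite (Fpn p n) \<and> card (Fpn p n) = p ^ n"
proof (induction n)
  case 0 then show ?case by (simp add: Fpn_0)
next
  case (Suc n)
  then show ?case using Fpn_Suc_inj[of n p]
    by (simp add: Fpn_Suc card_image card_cartesian_product)
qed

lemma finite_Fpn[simp]: "finite (Fpn p n)" using Fpn_finite_card by blast
lemma card_Fpn[simp]: "card (Fpn p n) = p ^ n" using Fpn_finite_card by blast

lemma vzero_mem[simp]: "0 < p \<Longrightarrow> vzero \<in> Fpn p n"
  by (simp add: Fpn_def vzero_def)

lemma vadd_mem[simp]: "0 < p \<Longrightarrow> x \<in> Fpn p n \<Longrightarrow> y \<in> Fpn p n \<Longrightarrow> vadd p x y \<in> Fpn p n"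
  by (simp add: Fpn_def vadd_def)

lemma vsmult_mem[simp]: "0 < p \<Longrightarrow> x \<in> Fpn p n \<Longrightarrow> vsmult p c x \<in> Fpn p n"
  by (simp add: Fpn_def vsmult_def)

lemma vneg_mem[simp]: "0 < p \<Longrightarrow> x \<in> Fpn p n \<Longrightarrow> vneg p x \<in> Fpn p n"
  by (simp add: vneg_def)

lemma vec_eq_cong:
  assumes "x \<in> Fpn p n" "y \<in> Fpn p n" "\<And>i. i < n \<Longrightarrow> [x i = y i] (mod p)"
  shows "x = y"
proof
  fix i show "x i = y i"
  proof (cases "i < n")
    case True then show ?thesis using assms cong_less_imp_eq_nat[of "x i" p "y i"]
      by (auto simp: Fpn_def)
  next
    case False then show ?thesis using assms by (auto simp: Fpn_def)
  qed
qed

lemma vadd_cong: "[vadd p x y i = x i + y i] (mod p)"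
  by (simp add: vadd_def cong_def)

lemma vsmult_cong: "[vsmult p c x i = c * x i] (mod p)"
  by (simp add: vsmult_def cong_def)

lemma vadd_comm: "vadd p x y = vadd p y x"
  by (simp add: vadd_def add.commute)

lemma vadd_assoc: "vadd p (vadd p x y) z = vadd p x (vadd p y z)"
  by (simp add: vadd_def fun_eq_iff mod_add_left_eq mod_add_right_eq add.assoc)

lemma vadd_zero[simp]: "x \<in> Fpn p n \<Longrightarrow> vadd p x vzero = x"
proof -
  assume x: "x \<in> Fpn p n"
  show ?thesis
  proof
    fix i show "vadd p x vzero i = x i"
      using x by (cases "i < n") (auto simp: vadd_def vzero_def Fpn_def)
  qed
qed

lemma vzero_add[simp]: "x \<in> Fpn p n \<Longrightarrow> vadd p vzero x = x"
  by (metis vadd_comm vadd_zero)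

lemma vadd_neg[simp]:
  assumes "0 < p" "x \<in> Fpn p n" shows "vadd p x (vneg p x) = vzero"
proof (rule vec_eq_cong[of _ p n])
  fix i assume "i < n"
  have "[vadd p x (vneg p x) i = x i + (p - 1) * x i] (mod p)"
    using vadd_cong[of p x "vneg p x" i] vsmult_cong[of p "p-1" x i]
    by (metis cong_add_lcancel_nat cong_trans vneg_def)
  moreover have "x i + (p - 1) * x i = p * x i" using assms(1)
    by (metis Suc_diff_1 add.commute mult_Suc)
  ultimately show "[vadd p x (vneg p x) i = vzero i] (mod p)"
    by (simp add: vzero_def cong_def)
qed (use assms in auto)

lemma sum_endo:
  assumes "finite S" "g ` S \<subseteq> S" "inj_on g S"
  shows "(\<Sum>x\<in>S. f (g x)) = (\<Sum>x\<in>S. f x)"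
proof -
  have "g ` S = S" using assms by (meson card_image card_subset_eq)
  then have "(\<Sum>x\<in>S. f x) = (\<Sum>x\<in>g ` S. f x)" by simp
  also have "\<dots> = (\<Sum>x\<in>S. f (g x))" using assms(3) by (simp add: sum.reindex)
  finally show ?thesis by simp
qed

lemma vadd_inj:
  assumes "x \<in> Fpn p n" "y \<in> Fpn p n" "vadd p x d = vadd p y d"
  shows "x = y"
proof (rule vec_eq_cong[OF assms(1,2)])
  fix i assume "i < n"
  have "[x i + d i = y i + d i] (mod p)"
    using vadd_cong[of p x d i] vadd_cong[of p y d i] assms(3)
    by (metis cong_sym cong_trans)
  then show "[x i = y i] (mod p)" by (simp add: cong_add_rcancel_nat)
qed

lemma vsmult_inj:
  assumes "coprime c p" "x \<in> Fpn p n" "y \<in> Fpn p n" "vsmult p c x = vsmult p c y"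
  shows "x = y"
proof (rule vec_eq_cong[OF assms(2,3)])
  fix i assume "i < n"
  have "[c * x i = c * y i] (mod p)"
    using vsmult_cong[of p c x i] vsmult_cong[of p c y i] assms(4)
    by (metis cong_sym cong_trans)
  then show "[x i = y i] (mod p)" using assms(1) by (simp add: cong_mult_lcancel_nat)
qed

lemma sum_shift:
  assumes "0 < p" "d \<in> Fpn p n"
  shows "(\<Sum>x\<in>Fpn p n. f (vadd p x d)) = (\<Sum>x\<in>Fpn p n. f x)"
  by (rule sum_endo) (use assms vadd_inj in \<open>auto intro: inj_onI\<close>)

lemma sum_shift_left:
  assumes "0 < p" "d \<in> Fpn p n"
  shows "(\<Sum>x\<in>Fpn p n. f (vadd p d x)) = (\<Sum>x\<in>Fpn p n. f x)"
  using sum_shift[OF assms, of f] by (simp add: vadd_comm)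

lemma sum_smult:
  assumes "0 < p" "coprime c p"
  shows "(\<Sum>x\<in>Fpn p n. f (vsmult p c x)) = (\<Sum>x\<in>Fpn p n. f x)"
  by (rule sum_endo) (use assms vsmult_inj in \<open>auto intro: inj_onI\<close>)




locale setting =
  fixes p n :: nat
  assumes p_prime: "prime p" and p_odd: "odd p"
begin

abbreviation "V \<equiv> Fpn p n"
abbreviation "N \<equiv> p ^ n"

lemma p_pos[simp]: "0 < p" using p_prime prime_gt_0_nat by blast
lemma p_gt1: "1 < p" using p_prime prime_gt_1_nat by blast
lemma p_ge3: "3 \<le> p"
proof -
  have "p \<noteq> 2" using p_odd by auto
  then show ?thesis using p_gt1 by linarith
qed
lemma N_pos[simp]: "0 < N" by simp

lemma coprime_less: "0 < c \<Longrightarrow> c < p \<Longrightarrow> coprime c p"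
proof -
  assume "0 < c" "c < p"
  then have "\<not> p dvd c" by (auto dest: dvd_imp_le)
  then have "coprime p c" using p_prime by (simp add: prime_imp_coprime_nat)
  then show ?thesis by (simp add: coprime_commute)
qed

lemma coprime_2: "coprime 2 p"
  using coprime_less[of 2] p_ge3 by simp

end

locale subsp = setting +
  fixes H assumes H_sub: "linear_subspace p n H"
begin

lemma H_V: "H \<subseteq> V" using H_sub by (simp add: linear_subspace_def)
lemma H_mem: "h \<in> H \<Longrightarrow> h \<in> V" using H_V by blast
lemma H_fin[simp]: "finite H" by (rule finite_subset[OF H_V]) simp
lemma H_zero[simp]: "vzero \<in> H" using H_sub by (simp add: linear_subspace_def)
lemma H_card_pos: "0 < card H" using H_zero H_fin card_gt_0_iff by (metis empty_iff)
lemma H_add[simp]: "x \<in> H \<Longrightarrow> y \<in> H \<Longrightarrow> vadd p x y \<in> H"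
  using H_sub by (simp add: linear_subspace_def)
lemma H_smult[simp]: "c < p \<Longrightarrow> x \<in> H \<Longrightarrow> vsmult p c x \<in> H"
  using H_sub by (simp add: linear_subspace_def)
lemma H_neg[simp]: "x \<in> H \<Longrightarrow> vneg p x \<in> H"
  by (simp add: vneg_def)
lemma H_two[simp]: "x \<in> H \<Longrightarrow> vsmult p 2 x \<in> H"
  using p_ge3 by simp

lemma H_ne: "H \<noteq> {}" using H_zero by blast

lemma sumH_shift:
  assumes h0: "h0 \<in> H" shows "(\<Sum>h\<in>H. f (vadd p h0 h)) = (\<Sum>h\<in>H. f h)"
proof (rule sum_endo)
  show "inj_on (vadd p h0) H"
  proof (rule inj_onI)
    fix x y assume "x \<in> H" "y \<in> H" "vadd p h0 x = vadd p h0 y"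
    then have "vadd p x h0 = vadd p y h0" by (simp add: vadd_comm)
    then show "x = y" using \<open>x \<in> H\<close> \<open>y \<in> H\<close> by (meson H_mem vadd_inj)
  qed
qed (use h0 in auto)

lemma sumH_two: "(\<Sum>h\<in>H. f (vsmult p 2 h)) = (\<Sum>h\<in>H. f h)"
  by (rule sum_endo) (auto intro!: inj_onI dest: H_mem intro: vsmult_inj[OF coprime_2])

lemma sumH_neg: "(\<Sum>h\<in>H. f (vneg p h)) = (\<Sum>h\<in>H. f h)"
proof (rule sum_endo)
  have cp: "coprime (p - 1) p" using p_gt1 by (intro coprime_less) auto
  show "inj_on (vneg p) H"
    by (auto intro!: inj_onI dest: H_mem simp: vneg_def intro: vsmult_inj[OF cp])
qed auto

definition Ek :: "((nat \<Rightarrow> nat) \<Rightarrow> 'a::field_char_0) \<Rightarrow> (nat \<Rightarrow> nat) \<Rightarrow> 'a" where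
  "Ek f x = (\<Sum>h\<in>H. f (vadd p x h)) / of_nat (card H)"

lemma Ek_inv: "x \<in> V \<Longrightarrow> h0 \<in> H \<Longrightarrow> Ek f (vadd p x h0) = Ek f x"
  unfolding Ek_def using sumH_shift[of h0 "\<lambda>h. f (vadd p x h)"]
  by (simp add: vadd_assoc)

lemma Ek_const[simp]: "Ek (\<lambda>_. c) x = c"
  using H_ne by (simp add: Ek_def)

lemma Ek_diff: "Ek (\<lambda>x. f x - g x) y = Ek f y - Ek g y"
  by (simp add: Ek_def sum_subtractf diff_divide_distrib)

lemma Ek_of_real: "of_real (Ek f x) = Ek (\<lambda>y. of_real (f y) :: 'a::{field_char_0,real_field}) x"
  by (simp add: Ek_def of_real_sum of_real_divide)

lemma Ek_bounds:
  assumes "\<And>x. 0 \<le> f x" "\<And>x. f x \<le> (1::real)"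
  shows "0 \<le> Ek f x" "Ek f x \<le> 1"
proof -
  show "0 \<le> Ek f x" unfolding Ek_def using assms by (simp add: sum_nonneg)
  have "(\<Sum>h\<in>H. f (vadd p x h)) \<le> of_nat (card H)"
    using sum_mono[of H "\<lambda>h. f (vadd p x h)" "\<lambda>_. 1"] assms by simp
  then show "Ek f x \<le> 1" unfolding Ek_def using H_card_pos by simp
qed

lemma sum_shift_mul:
  assumes "h \<in> V"
  shows "(\<Sum>x\<in>V. f (vadd p x h) * g x) = (\<Sum>y\<in>V. f y * g (vadd p y (vneg p h)))"
proof -
  have "(\<Sum>x\<in>V. f (vadd p x h) * g x)
     = (\<Sum>y\<in>V. f (vadd p (vadd p y (vneg p h)) h) * g (vadd p y (vneg p h)))"
    using sum_shift[OF p_pos vneg_mem[OF p_pos assms], of "\<lambda>x. f (vadd p x h) * g x"] by simp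
  also have "\<dots> = (\<Sum>y\<in>V. f y * g (vadd p y (vneg p h)))"
  proof (rule sum.cong[OF refl])
    fix y assume "y \<in> V"
    have "vadd p (vadd p y (vneg p h)) h = y"
      using assms \<open>y \<in> V\<close>
      by (simp add: vadd_assoc vadd_comm[of p "vneg p h" h])
    then show "f (vadd p (vadd p y (vneg p h)) h) * g (vadd p y (vneg p h))
             = f y * g (vadd p y (vneg p h))" by simp
  qed
  finally show ?thesis .
qed

lemma Ek_selfadj:
  "(\<Sum>x\<in>V. Ek f x * g x) = (\<Sum>x\<in>V. f x * Ek g x)"
proof -
  have "(\<Sum>x\<in>V. Ek f x * g x) = (\<Sum>x\<in>V. \<Sum>h\<in>H. f (vadd p x h) * g x) / of_nat (card H)"
    by (simp add: Ek_def sum_divide_distrib sum_distrib_right)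
  also have "(\<Sum>x\<in>V. \<Sum>h\<in>H. f (vadd p x h) * g x) = (\<Sum>h\<in>H. \<Sum>x\<in>V. f (vadd p x h) * g x)"
    by (rule sum.swap)
  also have "\<dots> = (\<Sum>h\<in>H. \<Sum>y\<in>V. f y * g (vadd p y (vneg p h)))"
    by (rule sum.cong[OF refl]) (rule sum_shift_mul, erule H_mem)
  also have "\<dots> = (\<Sum>y\<in>V. f y * (\<Sum>h\<in>H. g (vadd p y (vneg p h))))"
    by (simp add: sum.swap[of _ H] sum_distrib_left)
  also have "\<dots> = (\<Sum>y\<in>V. f y * (\<Sum>h\<in>H. g (vadd p y h)))"
    using sumH_neg[of "\<lambda>h. g (vadd p _ h)"] by simp
  finally show ?thesis by (simp add: Ek_def sum_divide_distrib sum_distrib_left)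
qed

end

locale two_subsp = setting +
  fixes H H' assumes H: "linear_subspace p n H" and H': "linear_subspace p n H'" and sub: "H' \<subseteq> H"
begin

sublocale S: subsp p n H using H by unfold_locales
sublocale S': subsp p n H' using H' by unfold_locales

lemma Ek_refine: "x \<in> V \<Longrightarrow> S.Ek (S'.Ek f) x = S.Ek f x"
proof -
  assume x: "x \<in> V"
  have "S.Ek (S'.Ek f) x = (\<Sum>h\<in>H. \<Sum>h'\<in>H'. f (vadd p (vadd p x h) h')) / of_nat (card H') / of_nat (card H)"
    by (simp add: S.Ek_def S'.Ek_def sum_divide_distrib)
  also have "(\<Sum>h\<in>H. \<Sum>h'\<in>H'. f (vadd p (vadd p x h) h')) = (\<Sum>h'\<in>H'. \<Sum>h\<in>H. f (vadd p x (vadd p h' h)))"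
  proof -
    have e: "vadd p (vadd p x h) h' = vadd p x (vadd p h' h)" for h h'
      by (simp add: vadd_assoc vadd_comm[of p h h'])
    show ?thesis by (subst sum.swap) (simp add: e)
  qed
  also have "\<dots> = (\<Sum>h'\<in>H'. \<Sum>h\<in>H. f (vadd p x h))"
    by (rule sum.cong[OF refl]) (rule S.sumH_shift, use sub in blast)
  also have "\<dots> = of_nat (card H') * (\<Sum>h\<in>H. f (vadd p x h))" by simp
  finally show ?thesis using S'.H_card_pos S'.H_ne by (simp add: S.Ek_def)
qed

lemma Ek_refine2: "x \<in> V \<Longrightarrow> S'.Ek (S.Ek f) x = S.Ek f x"
proof -
  assume x: "x \<in> V"
  have "S'.Ek (S.Ek f) x = (\<Sum>h'\<in>H'. S.Ek f x) / of_nat (card H')"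
    unfolding S'.Ek_def
    by (rule arg_cong[where f="\<lambda>t. t / _"], rule sum.cong[OF refl], rule S.Ek_inv[OF x], use sub in blast)
  then show ?thesis using S'.H_ne by simp
qed

end




definition ee :: "nat \<Rightarrow> nat \<Rightarrow> complex" where
  "ee p k = exp (2 * complex_of_real pi * \<i> * complex_of_nat k / complex_of_nat p)"

lemma ee_add: "ee p (a + b) = ee p a * ee p b"
  by (simp add: ee_def add_divide_distrib distrib_left exp_add)

lemma ee_0[simp]: "ee p 0 = 1" by (simp add: ee_def)

lemma ee_1_iff: "1 \<le> p \<Longrightarrow> ee p k = 1 \<longleftrightarrow> p dvd k"
  unfolding ee_def by (rule complex_root_unity_eq_1)

lemma ee_mult: "ee p (k * t) = ee p k ^ t"
  by (induction t) (simp_all add: ee_add)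

lemma ee_mod: assumes "1 \<le> p" shows "ee p a = ee p (a mod p)"
proof -
  have "ee p a = ee p (a mod p) * ee p (p*(a div p))"
    using ee_add[of p "a mod p" "p * (a div p)"] by (simp only: mod_mult_div_eq)
  moreover have "ee p (p*(a div p)) = 1" using ee_1_iff[OF assms] by simp
  ultimately show ?thesis by simp
qed

lemma ee_cong: assumes "1 \<le> p" "[a = b] (mod p)" shows "ee p a = ee p b"
  using ee_mod[OF assms(1), of a] ee_mod[OF assms(1), of b] assms(2) by (simp add: cong_def)

lemma ee_norm[simp]: "norm (ee p k) = 1"
proof -
  have "2 * complex_of_real pi * \<i> * complex_of_nat k / complex_of_nat p = \<i> * complex_of_real (2 * pi * k / p)"
    by simp
  then show ?thesis unfolding ee_def by (simp only:) (rule norm_exp_i_times)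
qed

lemma ee_cnj_mult[simp]: "cnj (ee p k) * ee p k = 1"
  using ee_norm[of p k] by (metis complex_norm_square mult.commute of_real_1 power_one)

lemma ee_mult_cnj[simp]: "ee p k * cnj (ee p k) = 1"
  using ee_cnj_mult by (simp add: mult.commute)

lemma ee_nz[simp]: "ee p k \<noteq> 0" by (simp add: ee_def)

lemma ee_cnj: assumes "1 \<le> p" shows "cnj (ee p k) = ee p ((p - 1) * k)"
proof -
  have "ee p ((p - 1) * k) * ee p k = ee p (p * k)"
  proof -
    obtain q where q: "p = Suc q" using assms by (cases p) auto
    show ?thesis unfolding ee_add[symmetric] by (simp add: q add.commute)
  qed
  also have "\<dots> = 1" using ee_1_iff[OF assms] by simp
  finally have "ee p ((p - 1) * k) * ee p k = cnj (ee p k) * ee p k" by simp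
  then show ?thesis using ee_nz[of p k] by (metis mult_cancel_right)
qed

lemma geom_ee:
  assumes "1 \<le> p"
  shows "(\<Sum>t<p. ee p (k * t)) = (if p dvd k then of_nat p else 0)"
proof (cases "p dvd k")
  case True
  then have "\<And>t. ee p (k * t) = 1" using ee_1_iff[OF assms] by auto
  then show ?thesis using True by simp
next
  case False
  then have ne: "ee p k \<noteq> 1" using ee_1_iff[OF assms] by auto
  have "(\<Sum>t<p. ee p (k * t)) = (\<Sum>t<p. ee p k ^ t)" by (simp add: ee_mult)
  also have "\<dots> = (ee p k ^ p - 1) / (ee p k - 1)" using geometric_sum[OF ne] by simp
  also have "ee p k ^ p = 1" using ee_mult[of p k p, symmetric] ee_1_iff[OF assms, of "k * p"] by simp
  finally show ?thesis using False by simp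
qed

lemma dotp_Suc_upd:
  assumes "x \<in> Fpn p n"
  shows "dotp (Suc n) w (x(n:=t)) = dotp n w x + w n * t"
  unfolding dotp_def by (simp add: sum.lessThan_Suc)

lemma orth_core:
  assumes "1 \<le> p"
  shows "(\<Sum>x\<in>Fpn p n. ee p (dotp n w x)) = (if \<forall>i<n. p dvd w i then of_nat (p ^ n) else 0)"
proof (induction n)
  case 0 then show ?case by (simp add: Fpn_0 dotp_def)
next
  case (Suc n)
  have "(\<Sum>x\<in>Fpn p (Suc n). ee p (dotp (Suc n) w x))
      = (\<Sum>xt\<in>Fpn p n \<times> {..<p}. ee p (dotp (Suc n) w ((\<lambda>(x,t). x(n:=t)) xt)))"
    unfolding Fpn_Suc by (rule sum.reindex[OF Fpn_Suc_inj, unfolded comp_def])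
  also have "\<dots> = (\<Sum>xt\<in>Fpn p n \<times> {..<p}. ee p (dotp n w (fst xt)) * ee p (w n * snd xt))"
    by (rule sum.cong[OF refl]) (auto simp: dotp_Suc_upd ee_add)
  also have "\<dots> = (\<Sum>x\<in>Fpn p n. ee p (dotp n w x)) * (\<Sum>t<p. ee p (w n * t))"
    by (simp add: sum_product sum.cartesian_product split_def)
  also have "\<dots> = (if \<forall>i<Suc n. p dvd w i then of_nat (p ^ Suc n) else 0)"
    using Suc geom_ee[OF assms, of "w n"] by (auto simp: less_Suc_eq)
  finally show ?case .
qed

context setting begin

definition chi :: "(nat \<Rightarrow> nat) \<Rightarrow> (nat \<Rightarrow> nat) \<Rightarrow> complex" where
  "chi u x = ee p (dotp n u x)"

lemma one_le_p: "1 \<le> p" using p_pos by linarith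

lemma chi_norm[simp]: "norm (chi u x) = 1" by (simp add: chi_def)
lemma chi_cnj_mult[simp]: "cnj (chi u x) * chi u x = 1" by (simp add: chi_def)
lemma chi_mult_cnj[simp]: "chi u x * cnj (chi u x) = 1" by (simp add: chi_def)
lemma chi_nz[simp]: "chi u x \<noteq> 0" by (simp add: chi_def)

lemma chi_comm: "chi u x = chi x u"
  by (simp add: chi_def dotp_def mult.commute)

lemma chi_cong_x:
  assumes "\<And>i. i < n \<Longrightarrow> [x i = y i] (mod p)" shows "chi u x = chi u y"
  unfolding chi_def dotp_def
  by (rule ee_cong[OF one_le_p], rule cong_sum, rule cong_scalar_left) (use assms in auto)

lemma chi_add_x: "chi u (vadd p x y) = chi u x * chi u y"
proof -
  have "[dotp n u (vadd p x y) = dotp n u x + dotp n u y] (mod p)"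
    unfolding dotp_def sum.distrib[symmetric] distrib_left[symmetric]
    by (rule cong_sum, rule cong_scalar_left, rule vadd_cong)
  then show ?thesis unfolding chi_def by (simp add: ee_cong[OF one_le_p] ee_add)
qed

lemma chi_add_u: "chi (vadd p u v) x = chi u x * chi v x"
  using chi_add_x chi_comm by metis

lemma chi_zero[simp]: "chi u vzero = 1"
  by (simp add: chi_def dotp_def vzero_def)

lemma chi_smult_x: "chi u (vsmult p c x) = chi u x ^ c"
proof -
  have "[dotp n u (vsmult p c x) = dotp n u x * c] (mod p)"
    unfolding dotp_def sum_distrib_right
    by (rule cong_sum) (metis cong_scalar_left mult.assoc mult.commute vsmult_cong)
  then show ?thesis unfolding chi_def by (simp add: ee_cong[OF one_le_p] ee_mult)
qed

lemma chi_smult_u: "chi (vsmult p c u) x = chi u x ^ c"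
  using chi_smult_x chi_comm by metis

lemma chi_neg_x: "chi u (vneg p x) = cnj (chi u x)"
proof -
  have "[dotp n u (vneg p x) = (p - 1) * dotp n u x] (mod p)"
    unfolding dotp_def sum_distrib_left vneg_def
    by (rule cong_sum) (metis cong_scalar_left mult.assoc mult.commute vsmult_cong)
  then show ?thesis unfolding chi_def by (simp add: ee_cong[OF one_le_p] ee_cnj[OF one_le_p])
qed

lemma chi_neg_u: "chi (vneg p u) x = cnj (chi u x)"
  using chi_neg_x chi_comm by metis

lemma cong_neg_iff:
  fixes a b :: nat
  shows "[a + (p - 1) * b = 0] (mod p) \<longleftrightarrow> [a = b] (mod p)"
proof -
  have e: "a + (p - 1) * b + b = a + p * b"
    using p_pos by (metis add.assoc add.commute mult_Suc Suc_diff_1)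
  have "[a + (p - 1) * b = 0] (mod p) \<longleftrightarrow> [a + (p - 1) * b + b = b] (mod p)"
    by (metis add_0 cong_add_rcancel_nat)
  also have "\<dots> \<longleftrightarrow> [a + p * b = b] (mod p)" by (simp only: e)
  also have "\<dots> \<longleftrightarrow> [a = b] (mod p)" by (simp add: cong_def)
  finally show ?thesis .
qed

lemma orth:
  assumes "x \<in> V" "y \<in> V"
  shows "(\<Sum>u\<in>V. chi u x * cnj (chi u y)) = (if x = y then of_nat N else 0)"
proof -
  define w where "w = (\<lambda>i. x i + (p - 1) * y i)"
  have "chi u x * cnj (chi u y) = ee p (dotp n w u)" for u
  proof -
    have "chi u x * cnj (chi u y) = chi u x * chi u (vneg p y)" by (simp add: chi_neg_x)
    also have "\<dots> = chi u (vadd p x (vneg p y))" by (simp add: chi_add_x)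
    also have "\<dots> = chi u w"
      by (rule chi_cong_x) (simp add: w_def vneg_def cong_add cong_scalar_left vadd_cong vsmult_cong
          cong_trans[OF vadd_cong])
    finally show ?thesis by (simp add: chi_def dotp_def mult.commute)
  qed
  then have "(\<Sum>u\<in>V. chi u x * cnj (chi u y)) = (\<Sum>u\<in>V. ee p (dotp n w u))" by simp
  also have "\<dots> = (if \<forall>i<n. p dvd w i then of_nat N else 0)" by (rule orth_core[OF one_le_p])
  also have "(\<forall>i<n. p dvd w i) \<longleftrightarrow> x = y"
  proof
    assume "\<forall>i<n. p dvd w i"
    then have "\<And>i. i < n \<Longrightarrow> [x i = y i] (mod p)"
      using cong_neg_iff by (simp add: w_def cong_0_iff)
    then show "x = y" using vec_eq_cong assms by blast
  next
    assume "x = y"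
    then show "\<forall>i<n. p dvd w i" using cong_neg_iff by (simp add: w_def cong_0_iff[symmetric])
  qed
  finally show ?thesis .
qed

end



lemma amgm3:
  fixes x y z eta :: real
  assumes "0 \<le> x" "x \<le> eta" "0 \<le> y" "0 \<le> z"
  shows "x * y * z \<le> eta * ((y^2 + z^2) / 2)"
proof -
  have "0 \<le> (y - z)^2" by simp
  then have a: "y * z \<le> (y^2 + z^2) / 2" by (simp add: power2_eq_square algebra_simps)
  have "x * y * z = x * (y * z)" by simp
  also have "\<dots> \<le> eta * (y * z)" using assms by (simp add: mult_right_mono)
  also have "\<dots> \<le> eta * ((y^2 + z^2) / 2)" using mult_left_mono[OF a, of eta] assms by simp
  finally show ?thesis .
qed

lemma half_bound:
  fixes eta s t :: real
  assumes "0 \<le> eta" "s \<le> 1" "t \<le> 1"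
  shows "eta * (s + t) / 2 \<le> eta"
proof -
  have "eta * (s + t) \<le> eta * 2" using mult_left_mono[of "s+t" 2 eta] assms by simp
  then show ?thesis by simp
qed

context setting begin

definition fh :: "((nat \<Rightarrow> nat) \<Rightarrow> complex) \<Rightarrow> (nat \<Rightarrow> nat) \<Rightarrow> complex" where
  "fh f u = (\<Sum>x\<in>V. f x * cnj (chi u x)) / of_nat N"

lemma inversion:
  assumes x: "x \<in> V"
  shows "(\<Sum>u\<in>V. fh f u * chi u x) = f x"
proof -
  have e: "fh f u * chi u x = (\<Sum>y\<in>V. f y * (chi u x * cnj (chi u y))) / of_nat N" for u
  proof -
    have "(\<Sum>y\<in>V. f y * cnj (chi u y)) * chi u x = (\<Sum>y\<in>V. f y * (chi u x * cnj (chi u y)))"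
      by (subst sum_distrib_right) (simp add: mult_ac)
    then show ?thesis by (simp add: fh_def)
  qed
  have "(\<Sum>u\<in>V. fh f u * chi u x) = (\<Sum>u\<in>V. \<Sum>y\<in>V. f y * (chi u x * cnj (chi u y))) / of_nat N"
    by (simp only: e sum_divide_distrib)
  also have "(\<Sum>u\<in>V. \<Sum>y\<in>V. f y * (chi u x * cnj (chi u y))) = (\<Sum>y\<in>V. f y * (\<Sum>u\<in>V. chi u x * cnj (chi u y)))"
    by (subst sum.swap) (simp add: sum_distrib_left)
  also have "\<dots> = (\<Sum>y\<in>V. if y = x then f x * of_nat N else 0)"
    by (rule sum.cong[OF refl]) (auto simp: orth[OF x])
  also have "\<dots> = f x * of_nat N" using x by simp
  finally show ?thesis by simp
qed

lemma parseval:
  "(\<Sum>x\<in>V. f x * cnj (g x)) = of_nat N * (\<Sum>u\<in>V. fh f u * cnj (fh g u))"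
proof -
  have "(\<Sum>x\<in>V. f x * cnj (g x)) = (\<Sum>x\<in>V. f x * cnj (\<Sum>u\<in>V. fh g u * chi u x))"
    by (rule sum.cong[OF refl]) (simp add: inversion)
  also have "\<dots> = (\<Sum>x\<in>V. \<Sum>u\<in>V. cnj (fh g u) * (f x * cnj (chi u x)))"
    by (simp add: sum_distrib_left mult_ac)
  also have "\<dots> = (\<Sum>u\<in>V. cnj (fh g u) * (\<Sum>x\<in>V. f x * cnj (chi u x)))"
    by (subst sum.swap) (simp add: sum_distrib_left)
  also have "\<dots> = (\<Sum>u\<in>V. of_nat N * (fh f u * cnj (fh g u)))"
    by (rule sum.cong[OF refl]) (simp add: fh_def)
  finally show ?thesis by (simp add: sum_distrib_left)
qed

lemma parseval_norm:
  "(\<Sum>u\<in>V. (cmod (fh f u))^2) = (\<Sum>x\<in>V. (cmod (f x))^2) / real N"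
proof -
  have "complex_of_real (\<Sum>x\<in>V. (cmod (f x))^2) = of_nat N * complex_of_real (\<Sum>u\<in>V. (cmod (fh f u))^2)"
  proof -
    have a: "(\<Sum>x\<in>V. f x * cnj (f x)) = complex_of_real (\<Sum>x\<in>V. (cmod (f x))^2)"
      by (simp only: complex_norm_square of_real_sum)
    have b: "(\<Sum>u\<in>V. fh f u * cnj (fh f u)) = complex_of_real (\<Sum>u\<in>V. (cmod (fh f u))^2)"
      by (simp only: complex_norm_square of_real_sum)
    show ?thesis using parseval[of f f] unfolding a b .
  qed
  then have "(\<Sum>x\<in>V. (cmod (f x))^2) = real N * (\<Sum>u\<in>V. (cmod (fh f u))^2)"
    by (metis of_real_eq_iff of_real_mult of_real_of_nat_eq)
  then show ?thesis by simp
qed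

lemma parseval_le1:
  assumes "\<And>x. x \<in> V \<Longrightarrow> cmod (f x) \<le> 1"
  shows "(\<Sum>u\<in>V. (cmod (fh f u))^2) \<le> 1"
proof -
  have "(\<Sum>x\<in>V. (cmod (f x))^2) \<le> (\<Sum>x\<in>V. 1)"
    by (rule sum_mono) (use assms in \<open>simp add: power_le_one\<close>)
  then have "(\<Sum>x\<in>V. (cmod (f x))^2) \<le> real N" by simp
  then show ?thesis by (simp add: parseval_norm divide_le_eq_1)
qed

lemma fh_mod_cnj: "fh (\<lambda>y. v y * cnj (chi t y)) u = fh v (vadd p u t)"
  unfolding fh_def by (simp add: chi_add_u mult_ac)

lemma fh_mod: "fh (\<lambda>y. w y * chi t y) u = fh w (vadd p u (vneg p t))"
  unfolding fh_def by (simp add: chi_add_u chi_neg_u mult_ac)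

definition rho :: "(nat \<Rightarrow> nat) \<Rightarrow> (nat \<Rightarrow> nat)" where
  "rho u = vsmult p (p - 2) u"

lemma rho_mem: "u \<in> V \<Longrightarrow> rho u \<in> V" by (simp add: rho_def)

lemma coprime_pm2: "coprime (p - 2) p" using p_ge3 by (intro coprime_less) auto

lemma sum_rho: "(\<Sum>u\<in>V. f (rho u)) = (\<Sum>u\<in>V. f u)"
  unfolding rho_def by (rule sum_smult[OF p_pos coprime_pm2])

lemma cong_two_iff:
  fixes a b :: nat
  shows "[a + 2 * b = 0] (mod p) \<longleftrightarrow> [a = (p - 2) * b] (mod p)"
proof -
  have e: "a + 2 * b + (p - 2) * b = a + p * b"
    using p_ge3 by (simp add: algebra_simps)
  have "[a + 2 * b = 0] (mod p) \<longleftrightarrow> [a + 2 * b + (p - 2) * b = 0 + (p - 2) * b] (mod p)"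
    by (rule cong_add_rcancel_nat[symmetric])
  also have "\<dots> \<longleftrightarrow> [a + p * b = (p - 2) * b] (mod p)" by (simp only: e add_0)
  also have "\<dots> \<longleftrightarrow> [a = (p - 2) * b] (mod p)" by (simp add: cong_def)
  finally show ?thesis .
qed

lemma sum_d_chi:
  assumes b: "b \<in> V" and c: "c \<in> V"
  shows "(\<Sum>d\<in>V. chi b d * chi c d ^ 2) = (if b = rho c then of_nat N else 0)"
proof -
  define z where "z = vadd p b (vsmult p 2 c)"
  have "chi b d * chi c d ^ 2 = ee p (dotp n z d)" for d
    by (simp add: z_def chi_add_u chi_smult_u chi_def[symmetric])
  then have "(\<Sum>d\<in>V. chi b d * chi c d ^ 2) = (if \<forall>i<n. p dvd z i then of_nat N else 0)"
    using orth_core[OF one_le_p, of n z] by simp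
  also have "(\<forall>i<n. p dvd z i) \<longleftrightarrow> b = rho c"
  proof -
    have zc: "[z i = b i + 2 * c i] (mod p)" for i
    proof -
      have "[z i = b i + vsmult p 2 c i] (mod p)" unfolding z_def by (rule vadd_cong)
      moreover have "[b i + vsmult p 2 c i = b i + 2 * c i] (mod p)" by (rule cong_add[OF cong_refl vsmult_cong])
      ultimately show ?thesis by (rule cong_trans)
    qed
    have rc: "[rho c i = (p - 2) * c i] (mod p)" for i unfolding rho_def by (rule vsmult_cong)
    have "(p dvd z i) \<longleftrightarrow> [b i = (p - 2) * c i] (mod p)" for i
      using zc[of i] cong_two_iff[of "b i" "c i"] by (metis cong_0_iff cong_trans cong_sym)
    moreover have "b = rho c \<longleftrightarrow> (\<forall>i<n. [b i = (p - 2) * c i] (mod p))"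
    proof
      assume "b = rho c" then show "\<forall>i<n. [b i = (p - 2) * c i] (mod p)" using rc by simp
    next
      assume "\<forall>i<n. [b i = (p - 2) * c i] (mod p)"
      then show "b = rho c" using rc vec_eq_cong[OF b rho_mem[OF c]] by (metis cong_sym cong_trans)
    qed
    ultimately show ?thesis by simp
  qed
  finally show ?thesis .
qed

lemma chi_pow_pm1: "chi c x ^ (p - 1) = cnj (chi c x)"
  by (simp add: chi_smult_x[symmetric] chi_neg_x[symmetric] vneg_def)

lemma sum_x_chi:
  "(\<Sum>x\<in>V. a x * (chi (rho c) x * chi c x)) = of_nat N * fh a c"
proof -
  have "chi (rho c) x * chi c x = cnj (chi c x)" for x
  proof -
    have "chi (rho c) x * chi c x = chi c x ^ (p - 2) * chi c x"
      by (simp add: rho_def chi_smult_u)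
    also have "\<dots> = chi c x ^ (p - 1)"
    proof -
      have e: "p - 1 = Suc (p - 2)" using p_ge3 by simp
      show ?thesis by (simp only: e power_Suc2)
    qed
    finally show ?thesis by (simp only: chi_pow_pm1)
  qed
  then show ?thesis by (simp add: fh_def)
qed

definition Lam :: "((nat \<Rightarrow> nat) \<Rightarrow> complex) \<Rightarrow> ((nat \<Rightarrow> nat) \<Rightarrow> complex) \<Rightarrow> ((nat \<Rightarrow> nat) \<Rightarrow> complex) \<Rightarrow> complex" where
  "Lam a b c = (\<Sum>x\<in>V. \<Sum>d\<in>V. a x * b (vadd p x d) * c (vadd p x (vsmult p 2 d)))"

lemma swap4:
  "(\<Sum>x\<in>A. \<Sum>d\<in>B. \<Sum>u\<in>C. \<Sum>v\<in>D. F x d u v) = (\<Sum>u\<in>C. \<Sum>v\<in>D. \<Sum>x\<in>A. \<Sum>d\<in>B. F x d u v)"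
proof -
  have "(\<Sum>x\<in>A. \<Sum>d\<in>B. \<Sum>u\<in>C. \<Sum>v\<in>D. F x d u v) = (\<Sum>x\<in>A. \<Sum>u\<in>C. \<Sum>d\<in>B. \<Sum>v\<in>D. F x d u v)"
    by (rule sum.cong[OF refl], rule sum.swap)
  also have "\<dots> = (\<Sum>x\<in>A. \<Sum>u\<in>C. \<Sum>v\<in>D. \<Sum>d\<in>B. F x d u v)"
    by (rule sum.cong[OF refl], rule sum.cong[OF refl], rule sum.swap)
  also have "\<dots> = (\<Sum>u\<in>C. \<Sum>x\<in>A. \<Sum>v\<in>D. \<Sum>d\<in>B. F x d u v)"
    by (rule sum.swap)
  also have "\<dots> = (\<Sum>u\<in>C. \<Sum>v\<in>D. \<Sum>x\<in>A. \<Sum>d\<in>B. F x d u v)"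
    by (rule sum.cong[OF refl], rule sum.swap)
  finally show ?thesis .
qed

lemma sum_sep:
  fixes K :: "'a::comm_ring_1"
  shows "(\<Sum>x\<in>A. \<Sum>d\<in>B. K * (P x * Q d)) = K * ((\<Sum>x\<in>A. P x) * (\<Sum>d\<in>B. Q d))"
proof -
  have "(\<Sum>x\<in>A. P x) * (\<Sum>d\<in>B. Q d) = (\<Sum>x\<in>A. \<Sum>d\<in>B. P x * Q d)" by (rule sum_product)
  then show ?thesis by (simp add: sum_distrib_left)
qed

lemma Lam_fourier:
  "Lam a b c = of_nat N ^ 2 * (\<Sum>g\<in>V. fh a g * fh b (rho g) * fh c g)"
proof -
  have pt: "a x * b (vadd p x d) * c (vadd p x (vsmult p 2 d))
      = (\<Sum>u\<in>V. \<Sum>g\<in>V. (fh b u * fh c g) * ((a x * (chi u x * chi g x)) * (chi u d * chi g d ^ 2)))"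
    if x: "x \<in> V" and d: "d \<in> V" for x d
  proof -
    have "b (vadd p x d) * c (vadd p x (vsmult p 2 d))
        = (\<Sum>u\<in>V. fh b u * chi u (vadd p x d)) * (\<Sum>g\<in>V. fh c g * chi g (vadd p x (vsmult p 2 d)))"
      using x d by (simp add: inversion)
    also have "\<dots> = (\<Sum>u\<in>V. \<Sum>g\<in>V. (fh b u * chi u (vadd p x d)) * (fh c g * chi g (vadd p x (vsmult p 2 d))))"
      by (rule sum_product)
    finally have "a x * (b (vadd p x d) * c (vadd p x (vsmult p 2 d)))
        = (\<Sum>u\<in>V. \<Sum>g\<in>V. a x * ((fh b u * chi u (vadd p x d)) * (fh c g * chi g (vadd p x (vsmult p 2 d)))))"
      by (simp add: sum_distrib_left)
    also have "\<dots> = (\<Sum>u\<in>V. \<Sum>g\<in>V. (fh b u * fh c g) * ((a x * (chi u x * chi g x)) * (chi u d * chi g d ^ 2)))"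
      by (simp add: chi_add_x chi_smult_x mult_ac)
    finally show ?thesis by (simp add: mult_ac)
  qed
  have "Lam a b c = (\<Sum>x\<in>V. \<Sum>d\<in>V. \<Sum>u\<in>V. \<Sum>g\<in>V. (fh b u * fh c g) * ((a x * (chi u x * chi g x)) * (chi u d * chi g d ^ 2)))"
    unfolding Lam_def by (rule sum.cong[OF refl], rule sum.cong[OF refl], rule pt)
  also have "\<dots> = (\<Sum>u\<in>V. \<Sum>g\<in>V. \<Sum>x\<in>V. \<Sum>d\<in>V. (fh b u * fh c g) * ((a x * (chi u x * chi g x)) * (chi u d * chi g d ^ 2)))"
    by (rule swap4)
  also have "\<dots> = (\<Sum>u\<in>V. \<Sum>g\<in>V. (fh b u * fh c g) * ((\<Sum>x\<in>V. a x * (chi u x * chi g x)) * (\<Sum>d\<in>V. chi u d * chi g d ^ 2)))"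
    by (simp only: sum_sep)
  also have "\<dots> = (\<Sum>u\<in>V. \<Sum>g\<in>V. if u = rho g then (fh b u * fh c g) * ((\<Sum>x\<in>V. a x * (chi u x * chi g x)) * of_nat N) else 0)"
    by (rule sum.cong[OF refl], rule sum.cong[OF refl]) (simp add: sum_d_chi)
  also have "\<dots> = (\<Sum>g\<in>V. \<Sum>u\<in>V. if u = rho g then (fh b u * fh c g) * ((\<Sum>x\<in>V. a x * (chi u x * chi g x)) * of_nat N) else 0)"
    by (rule sum.swap)
  also have "\<dots> = (\<Sum>g\<in>V. (fh b (rho g) * fh c g) * ((\<Sum>x\<in>V. a x * (chi (rho g) x * chi g x)) * of_nat N))"
    by (rule sum.cong[OF refl]) (simp add: rho_mem)
  also have "\<dots> = (\<Sum>g\<in>V. (fh b (rho g) * fh c g) * (of_nat N * fh a g * of_nat N))"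
    by (simp add: sum_x_chi)
  finally show ?thesis by (simp add: sum_distrib_left power2_eq_square mult_ac)
qed

lemma Lam_bound:
  assumes a1: "\<And>x. x \<in> V \<Longrightarrow> cmod (a x) \<le> 1"
      and b1: "\<And>x. x \<in> V \<Longrightarrow> cmod (b x) \<le> 1"
      and c1: "\<And>x. x \<in> V \<Longrightarrow> cmod (c x) \<le> 1"
      and small: "(\<forall>u\<in>V. cmod (fh a u) \<le> eta) \<or> (\<forall>u\<in>V. cmod (fh b u) \<le> eta) \<or> (\<forall>u\<in>V. cmod (fh c u) \<le> eta)"
  shows "cmod (Lam a b c) \<le> real N ^ 2 * eta"
proof -
  define A where "A g = cmod (fh a g)" for g
  define B where "B g = cmod (fh b (rho g))" for g
  define C where "C g = cmod (fh c g)" for g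
  have SA: "(\<Sum>g\<in>V. (A g)^2) \<le> 1" unfolding A_def by (rule parseval_le1[OF a1])
  have SB: "(\<Sum>g\<in>V. (B g)^2) \<le> 1" unfolding B_def using parseval_le1[OF b1] sum_rho[of "\<lambda>u. (cmod (fh b u))^2"] by simp
  have SC: "(\<Sum>g\<in>V. (C g)^2) \<le> 1" unfolding C_def by (rule parseval_le1[OF c1])
  have "cmod (Lam a b c) = real N ^ 2 * cmod (\<Sum>g\<in>V. fh a g * fh b (rho g) * fh c g)"
    by (simp add: Lam_fourier norm_mult norm_power)
  also have "cmod (\<Sum>g\<in>V. fh a g * fh b (rho g) * fh c g) \<le> (\<Sum>g\<in>V. A g * B g * C g)"
    unfolding A_def B_def C_def by (rule order_trans[OF norm_sum]) (simp add: norm_mult)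
  also have "(\<Sum>g\<in>V. A g * B g * C g) \<le> eta"
  proof -
    have nn: "0 \<le> A g" "0 \<le> B g" "0 \<le> C g" for g by (simp_all add: A_def B_def C_def)
    have eta0: "0 \<le> eta" using small vzero_mem[OF p_pos, of n] by (meson norm_ge_zero order_trans)
    consider "\<forall>u\<in>V. cmod (fh a u) \<le> eta" | "\<forall>u\<in>V. cmod (fh b u) \<le> eta" | "\<forall>u\<in>V. cmod (fh c u) \<le> eta"
      using small by blast
    then show ?thesis
    proof cases
      case 1
      have "(\<Sum>g\<in>V. A g * B g * C g) \<le> (\<Sum>g\<in>V. eta * (((B g)^2 + (C g)^2) / 2))"
        by (rule sum_mono, rule amgm3) (use 1 nn in \<open>auto simp: A_def\<close>)
      also have "\<dots> = eta * ((\<Sum>g\<in>V. (B g)^2) + (\<Sum>g\<in>V. (C g)^2)) / 2"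
        by (simp add: sum_distrib_left sum.distrib sum_divide_distrib[symmetric] algebra_simps)
      also have "\<dots> \<le> eta" by (rule half_bound[OF eta0 SB SC])
      finally show ?thesis .
    next
      case 2
      have "(\<Sum>g\<in>V. A g * B g * C g) = (\<Sum>g\<in>V. B g * A g * C g)" by (simp add: mult_ac)
      also have "\<dots> \<le> (\<Sum>g\<in>V. eta * (((A g)^2 + (C g)^2) / 2))"
        by (rule sum_mono, rule amgm3) (use 2 nn rho_mem in \<open>auto simp: B_def\<close>)
      also have "\<dots> = eta * ((\<Sum>g\<in>V. (A g)^2) + (\<Sum>g\<in>V. (C g)^2)) / 2"
        by (simp add: sum_distrib_left sum.distrib sum_divide_distrib[symmetric] algebra_simps)
      also have "\<dots> \<le> eta" by (rule half_bound[OF eta0 SA SC])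
      finally show ?thesis .
    next
      case 3
      have "(\<Sum>g\<in>V. A g * B g * C g) = (\<Sum>g\<in>V. C g * A g * B g)" by (simp add: mult_ac)
      also have "\<dots> \<le> (\<Sum>g\<in>V. eta * (((A g)^2 + (B g)^2) / 2))"
        by (rule sum_mono, rule amgm3) (use 3 nn in \<open>auto simp: C_def\<close>)
      also have "\<dots> = eta * ((\<Sum>g\<in>V. (A g)^2) + (\<Sum>g\<in>V. (B g)^2)) / 2"
        by (simp add: sum_distrib_left sum.distrib sum_divide_distrib[symmetric] algebra_simps)
      also have "\<dots> \<le> eta" by (rule half_bound[OF eta0 SA SB])
      finally show ?thesis .
    qed
  qed
  finally show ?thesis by (simp add: mult_left_mono)
qed

end



lemma unit_alg:
  fixes a b :: complex
  assumes "cnj a * a = 1" "cnj b * b = 1"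
  shows "cnj (a * b) * (a * b ^ 2) = b"
proof -
  have "cnj (a * b) * (a * b ^ 2) = (cnj a * a) * (cnj b * b) * b"
    by (simp add: power2_eq_square mult_ac)
  then show ?thesis using assms by simp
qed

context subsp begin

lemma chi_sumH: "(\<Sum>h\<in>H. chi u h) = (if \<forall>h\<in>H. chi u h = 1 then of_nat (card H) else 0)"
proof (cases "\<forall>h\<in>H. chi u h = 1")
  case True then show ?thesis by simp
next
  case False
  then obtain h0 where h0: "h0 \<in> H" "chi u h0 \<noteq> 1" by blast
  have "(\<Sum>h\<in>H. chi u h) = (\<Sum>h\<in>H. chi u (vadd p h0 h))" using sumH_shift[OF h0(1), of "chi u"] by simp
  also have "\<dots> = chi u h0 * (\<Sum>h\<in>H. chi u h)" by (simp add: chi_add_x sum_distrib_left)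
  finally have "(1 - chi u h0) * (\<Sum>h\<in>H. chi u h) = 0" by (simp add: algebra_simps)
  then show ?thesis using False h0 by auto
qed

lemma Ek_cnj_chi: "Ek (\<lambda>y. cnj (chi u y)) x = cnj (chi u x) * (if \<forall>h\<in>H. chi u h = 1 then 1 else 0)"
proof -
  have "Ek (\<lambda>y. cnj (chi u y)) x = cnj (chi u x) * cnj (\<Sum>h\<in>H. chi u h) / of_nat (card H)"
    unfolding Ek_def by (simp add: chi_add_x sum_distrib_left)
  then show ?thesis using H_card_pos H_ne by (simp add: chi_sumH)
qed

lemma fh_Ek: "fh (Ek f) u = (if \<forall>h\<in>H. chi u h = 1 then fh f u else 0)"
proof -
  have "fh (Ek f) u = (\<Sum>x\<in>V. f x * Ek (\<lambda>y. cnj (chi u y)) x) / of_nat N"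
    unfolding fh_def by (simp add: Ek_selfadj)
  then show ?thesis by (cases "\<forall>h\<in>H. chi u h = 1") (auto simp: Ek_cnj_chi fh_def)
qed

definition mH :: "(nat \<Rightarrow> nat) \<Rightarrow> real" where
  "mH t = (if \<forall>h\<in>H. chi t h = 1 then real (card H) / real N else 0)"

lemma mH_nonneg: "0 \<le> mH t" by (simp add: mH_def)

lemma fh_ind: "fh (\<lambda>x. if x \<in> H then 1 else 0) t = complex_of_real (mH t)"
proof -
  have "(\<Sum>x\<in>V. (if x \<in> H then 1 else 0) * cnj (chi t x)) = (\<Sum>x\<in>V. if x \<in> H then cnj (chi t x) else 0)"
    by (rule sum.cong) auto
  also have "\<dots> = (\<Sum>x\<in>V \<inter> H. cnj (chi t x))" by (simp add: sum.inter_restrict)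
  also have "V \<inter> H = H" using H_V by blast
  also have "(\<Sum>x\<in>H. cnj (chi t x)) = cnj (\<Sum>x\<in>H. chi t x)" by simp
  finally show ?thesis unfolding fh_def mH_def by (simp add: chi_sumH)
qed

lemma ind_expand: "d \<in> V \<Longrightarrow> (if d \<in> H then 1 else 0) = (\<Sum>t\<in>V. complex_of_real (mH t) * chi t d)"
  using inversion[of d "\<lambda>x. if x \<in> H then 1 else 0"] by (simp add: fh_ind)

lemma mH_sum: "(\<Sum>t\<in>V. mH t) = 1"
proof -
  have "(1::complex) = (\<Sum>t\<in>V. complex_of_real (mH t))" using ind_expand[OF vzero_mem[OF p_pos]] by simp
  then have "complex_of_real (\<Sum>t\<in>V. mH t) = 1" by (simp add: of_real_sum)
  then show ?thesis by (metis of_real_eq_1_iff)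
qed

definition TrH :: "((nat \<Rightarrow> nat) \<Rightarrow> 'a::comm_ring_1) \<Rightarrow> ((nat \<Rightarrow> nat) \<Rightarrow> 'a) \<Rightarrow> ((nat \<Rightarrow> nat) \<Rightarrow> 'a) \<Rightarrow> 'a" where
  "TrH u v w = (\<Sum>x\<in>V. \<Sum>d\<in>H. u x * v (vadd p x d) * w (vadd p x (vsmult p 2 d)))"

lemma TrH_of_real:
  "complex_of_real (TrH u v w) = TrH (\<lambda>x. complex_of_real (u x)) (\<lambda>x. complex_of_real (v x)) (\<lambda>x. complex_of_real (w x))"
  by (simp add: TrH_def of_real_sum)

lemma TrH_expand:
  fixes u v w :: "(nat \<Rightarrow> nat) \<Rightarrow> complex"
  shows "TrH u v w = (\<Sum>t\<in>V. complex_of_real (mH t) * Lam u (\<lambda>y. v y * cnj (chi t y)) (\<lambda>y. w y * chi t y))"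
proof -
  define F where "F x d = u x * v (vadd p x d) * w (vadd p x (vsmult p 2 d))" for x d
  have "TrH u v w = (\<Sum>x\<in>V. \<Sum>d\<in>V. (if d \<in> H then 1 else 0) * F x d)"
  proof -
    have "(\<Sum>d\<in>H. F x d) = (\<Sum>d\<in>V. (if d \<in> H then 1 else 0) * F x d)" for x
    proof -
      have "(\<Sum>d\<in>V. (if d \<in> H then 1 else 0) * F x d) = (\<Sum>d\<in>V. if d \<in> H then F x d else 0)"
        by (rule sum.cong) auto
      also have "\<dots> = (\<Sum>d\<in>V \<inter> H. F x d)" by (simp add: sum.inter_restrict)
      also have "V \<inter> H = H" using H_V by blast
      finally show ?thesis by simp
    qed
    then show ?thesis unfolding TrH_def F_def by simp
  qed
  also have "\<dots> = (\<Sum>x\<in>V. \<Sum>d\<in>V. \<Sum>t\<in>V. complex_of_real (mH t) * (chi t d * F x d))"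
  proof (rule sum.cong[OF refl], rule sum.cong[OF refl])
    fix x d assume d: "d \<in> V"
    have "(if d \<in> H then 1 else 0) * F x d = (\<Sum>t\<in>V. complex_of_real (mH t) * chi t d) * F x d"
      by (simp only: ind_expand[OF d])
    also have "\<dots> = (\<Sum>t\<in>V. complex_of_real (mH t) * chi t d * F x d)" by (rule sum_distrib_right)
    finally show "(if d \<in> H then 1 else 0) * F x d = (\<Sum>t\<in>V. complex_of_real (mH t) * (chi t d * F x d))"
      by (simp add: mult.assoc)
  qed
  also have "\<dots> = (\<Sum>t\<in>V. \<Sum>x\<in>V. \<Sum>d\<in>V. complex_of_real (mH t) * (chi t d * F x d))"
  proof -
    have "(\<Sum>x\<in>V. \<Sum>d\<in>V. \<Sum>t\<in>V. complex_of_real (mH t) * (chi t d * F x d))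
        = (\<Sum>x\<in>V. \<Sum>t\<in>V. \<Sum>d\<in>V. complex_of_real (mH t) * (chi t d * F x d))"
      by (rule sum.cong[OF refl], rule sum.swap)
    also have "\<dots> = (\<Sum>t\<in>V. \<Sum>x\<in>V. \<Sum>d\<in>V. complex_of_real (mH t) * (chi t d * F x d))"
      by (rule sum.swap)
    finally show ?thesis .
  qed
  also have "\<dots> = (\<Sum>t\<in>V. complex_of_real (mH t) * Lam u (\<lambda>y. v y * cnj (chi t y)) (\<lambda>y. w y * chi t y))"
  proof (rule sum.cong[OF refl])
    fix t
    have pt: "chi t d * F x d = u x * (v (vadd p x d) * cnj (chi t (vadd p x d))) * (w (vadd p x (vsmult p 2 d)) * chi t (vadd p x (vsmult p 2 d)))" for x d
    proof -
      have e: "cnj (chi t (vadd p x d)) * chi t (vadd p x (vsmult p 2 d)) = chi t d"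
        unfolding chi_add_x chi_smult_x by (rule unit_alg) simp_all
      have "u x * (v (vadd p x d) * cnj (chi t (vadd p x d))) * (w (vadd p x (vsmult p 2 d)) * chi t (vadd p x (vsmult p 2 d)))
          = (cnj (chi t (vadd p x d)) * chi t (vadd p x (vsmult p 2 d))) * (u x * v (vadd p x d) * w (vadd p x (vsmult p 2 d)))"
        by (simp add: mult_ac)
      also have "\<dots> = chi t d * (u x * v (vadd p x d) * w (vadd p x (vsmult p 2 d)))" by (simp only: e)
      finally show ?thesis unfolding F_def by (rule sym)
    qed
    show "(\<Sum>x\<in>V. \<Sum>d\<in>V. complex_of_real (mH t) * (chi t d * F x d)) = complex_of_real (mH t) * Lam u (\<lambda>y. v y * cnj (chi t y)) (\<lambda>y. w y * chi t y)"
      unfolding Lam_def pt by (simp add: sum_distrib_left)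
  qed
  finally show ?thesis .
qed

lemma small_mod_cnj:
  assumes "\<forall>u\<in>V. cmod (fh v u) \<le> eta" "t \<in> V"
  shows "\<forall>u\<in>V. cmod (fh (\<lambda>y. v y * cnj (chi t y)) u) \<le> eta"
  using assms by (simp add: fh_mod_cnj)

lemma small_mod:
  assumes "\<forall>u\<in>V. cmod (fh v u) \<le> eta" "t \<in> V"
  shows "\<forall>u\<in>V. cmod (fh (\<lambda>y. v y * chi t y) u) \<le> eta"
  using assms by (simp add: fh_mod)

lemma TrH_bound:
  fixes u v w :: "(nat \<Rightarrow> nat) \<Rightarrow> complex"
  assumes u1: "\<And>x. x \<in> V \<Longrightarrow> cmod (u x) \<le> 1"
      and v1: "\<And>x. x \<in> V \<Longrightarrow> cmod (v x) \<le> 1"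
      and w1: "\<And>x. x \<in> V \<Longrightarrow> cmod (w x) \<le> 1"
      and small: "(\<forall>z\<in>V. cmod (fh u z) \<le> eta) \<or> (\<forall>z\<in>V. cmod (fh v z) \<le> eta) \<or> (\<forall>z\<in>V. cmod (fh w z) \<le> eta)"
  shows "cmod (TrH u v w) \<le> real N ^ 2 * eta"
proof -
  have L: "cmod (Lam u (\<lambda>y. v y * cnj (chi t y)) (\<lambda>y. w y * chi t y)) \<le> real N ^ 2 * eta" if t: "t \<in> V" for t
  proof (rule Lam_bound)
    show "cmod (u x) \<le> 1" if "x \<in> V" for x using u1 that .
    show "cmod (v x * cnj (chi t x)) \<le> 1" if "x \<in> V" for x using v1 that by (simp add: norm_mult)
    show "cmod (w x * chi t x) \<le> 1" if "x \<in> V" for x using w1 that by (simp add: norm_mult)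
    show "(\<forall>z\<in>V. cmod (fh u z) \<le> eta) \<or> (\<forall>z\<in>V. cmod (fh (\<lambda>y. v y * cnj (chi t y)) z) \<le> eta) \<or>
          (\<forall>z\<in>V. cmod (fh (\<lambda>y. w y * chi t y) z) \<le> eta)"
      using small small_mod_cnj[OF _ t, of v eta] small_mod[OF _ t, of w eta] by blast
  qed
  have "cmod (TrH u v w) \<le> (\<Sum>t\<in>V. cmod (complex_of_real (mH t) * Lam u (\<lambda>y. v y * cnj (chi t y)) (\<lambda>y. w y * chi t y)))"
    unfolding TrH_expand by (rule norm_sum)
  also have "\<dots> \<le> (\<Sum>t\<in>V. mH t * (real N ^ 2 * eta))"
  proof (rule sum_mono)
    fix t assume t: "t \<in> V"
    have "cmod (complex_of_real (mH t) * Lam u (\<lambda>y. v y * cnj (chi t y)) (\<lambda>y. w y * chi t y))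
        = mH t * cmod (Lam u (\<lambda>y. v y * cnj (chi t y)) (\<lambda>y. w y * chi t y))"
      by (simp add: norm_mult abs_of_nonneg[OF mH_nonneg])
    also have "\<dots> \<le> mH t * (real N ^ 2 * eta)" by (rule mult_left_mono[OF L[OF t] mH_nonneg])
    finally show "cmod (complex_of_real (mH t) * Lam u (\<lambda>y. v y * cnj (chi t y)) (\<lambda>y. w y * chi t y))
        \<le> mH t * (real N ^ 2 * eta)" .
  qed
  also have "\<dots> = real N ^ 2 * eta" by (simp add: sum_distrib_right[symmetric] mH_sum)
  finally show ?thesis .
qed

end



lemma lin_aux: "- (T::real) \<le> (A + B) / 2 \<Longrightarrow> - (A / 2) - B / 2 \<le> T" by (simp add: field_simps)

lemma vsmult2_eq: "vsmult p 2 d = vadd p d d"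
  by (simp add: vsmult_def vadd_def mult_2)

context subsp begin

lemma Ek_idem: "x \<in> V \<Longrightarrow> Ek (Ek f) x = Ek f x"
proof -
  assume x: "x \<in> V"
  have "Ek (Ek f) x = (\<Sum>h\<in>H. Ek f x) / of_nat (card H)"
    unfolding Ek_def[of "Ek f"]
    by (rule arg_cong[where f="\<lambda>t. t / _"], rule sum.cong[OF refl], rule Ek_inv[OF x])
  then show ?thesis using H_ne by simp
qed

lemma TrH_expand8:
  fixes f g :: "(nat \<Rightarrow> nat) \<Rightarrow> 'a::comm_ring_1"
  shows "TrH (\<lambda>x. f x + g x) (\<lambda>x. f x + g x) (\<lambda>x. f x + g x)
    = TrH f f f + (TrH g f f + TrH f g f + TrH f f g + TrH g g f + TrH g f g + TrH f g g + TrH g g g)"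
  unfolding TrH_def by (simp add: ring_distribs sum.distrib add_ac)

lemma TrH_real_bound:
  fixes u v w :: "(nat \<Rightarrow> nat) \<Rightarrow> real"
  assumes "\<And>x. x \<in> V \<Longrightarrow> \<bar>u x\<bar> \<le> 1" "\<And>x. x \<in> V \<Longrightarrow> \<bar>v x\<bar> \<le> 1" "\<And>x. x \<in> V \<Longrightarrow> \<bar>w x\<bar> \<le> 1"
      and small: "(\<forall>z\<in>V. cmod (fh (\<lambda>x. complex_of_real (u x)) z) \<le> eta) \<or>
                  (\<forall>z\<in>V. cmod (fh (\<lambda>x. complex_of_real (v x)) z) \<le> eta) \<or>
                  (\<forall>z\<in>V. cmod (fh (\<lambda>x. complex_of_real (w x)) z) \<le> eta)"
  shows "\<bar>TrH u v w\<bar> \<le> real N ^ 2 * eta"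
proof -
  have "\<bar>TrH u v w\<bar> = cmod (complex_of_real (TrH u v w))" by simp
  also have "\<dots> = cmod (TrH (\<lambda>x. complex_of_real (u x)) (\<lambda>x. complex_of_real (v x)) (\<lambda>x. complex_of_real (w x)))"
    by (simp only: TrH_of_real)
  also have "\<dots> \<le> real N ^ 2 * eta"
    by (rule TrH_bound) (use assms in auto)
  finally show ?thesis .
qed

lemma TrH_const_12:
  fixes F :: "(nat \<Rightarrow> nat) \<Rightarrow> real"
  assumes inv: "\<And>x d. x \<in> V \<Longrightarrow> d \<in> H \<Longrightarrow> F (vadd p x d) = F x"
  shows "TrH u F w = (\<Sum>x\<in>V. u x * F x * (\<Sum>d\<in>H. w (vadd p x (vsmult p 2 d))))"
  unfolding TrH_def by (rule sum.cong[OF refl]) (simp add: inv sum_distrib_left mult_ac)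

lemma TrH_const_13:
  fixes F :: "(nat \<Rightarrow> nat) \<Rightarrow> real"
  assumes inv: "\<And>x d. x \<in> V \<Longrightarrow> d \<in> H \<Longrightarrow> F (vadd p x d) = F x"
  shows "TrH u v F = (\<Sum>x\<in>V. u x * F x * (\<Sum>d\<in>H. v (vadd p x d)))"
  unfolding TrH_def by (rule sum.cong[OF refl]) (simp add: inv sum_distrib_left mult_ac)

end

locale decomp = two_subsp +
  fixes a :: "(nat \<Rightarrow> nat) \<Rightarrow> real"
  assumes a0: "\<And>x. 0 \<le> a x" and a1: "\<And>x. a x \<le> 1"
begin

definition "F1 = S.Ek a"
definition "F2 = S'.Ek a"
definition "hh x = F2 x - F1 x"
definition "gg x = a x - F2 x"

lemma F1_01: "0 \<le> F1 x" "F1 x \<le> 1" unfolding F1_def using S.Ek_bounds a0 a1 by auto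
lemma F2_01: "0 \<le> F2 x" "F2 x \<le> 1" unfolding F2_def using S'.Ek_bounds a0 a1 by auto
lemma hh_1: "\<bar>hh x\<bar> \<le> 1" unfolding hh_def using F1_01 F2_01 by (smt (verit))
lemma gg_1: "\<bar>gg x\<bar> \<le> 1" unfolding gg_def using a0 a1 F2_01 by (smt (verit))
lemma F2_1: "\<bar>F2 x\<bar> \<le> 1" using F2_01 by simp

lemma F1_inv: "x \<in> V \<Longrightarrow> d \<in> H \<Longrightarrow> F1 (vadd p x d) = F1 x"
  unfolding F1_def by (rule S.Ek_inv)

lemma F1_inv2: "x \<in> V \<Longrightarrow> d \<in> H \<Longrightarrow> F1 (vadd p x (vsmult p 2 d)) = F1 x"
  using F1_inv S.H_two by blast

lemma Ek_hh: "x \<in> V \<Longrightarrow> S.Ek hh x = 0"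
proof -
  assume x: "x \<in> V"
  have "S.Ek hh x = S.Ek F2 x - S.Ek F1 x" unfolding hh_def by (rule S.Ek_diff)
  also have "S.Ek F2 x = S.Ek a x" unfolding F2_def by (rule Ek_refine[OF x])
  also have "S.Ek F1 x = S.Ek a x" unfolding F1_def by (rule S.Ek_idem[OF x])
  finally show ?thesis by simp
qed

lemma sum_hh: "x \<in> V \<Longrightarrow> (\<Sum>d\<in>H. hh (vadd p x d)) = 0"
  using Ek_hh S.H_card_pos S.H_ne by (simp add: S.Ek_def)

lemma sum_hh2: "x \<in> V \<Longrightarrow> (\<Sum>d\<in>H. hh (vadd p x (vsmult p 2 d))) = 0"
  using sum_hh S.sumH_two[of "\<lambda>e. hh (vadd p x e)"] by simp

lemma hh_orth:
  assumes phi: "\<And>x d. x \<in> V \<Longrightarrow> d \<in> H \<Longrightarrow> phi (vadd p x d) = phi x"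
  shows "(\<Sum>x\<in>V. hh x * phi x) = 0"
proof -
  have "S.Ek phi x = phi x" if "x \<in> V" for x
    using that phi S.H_ne by (simp add: S.Ek_def)
  then have "(\<Sum>x\<in>V. hh x * phi x) = (\<Sum>x\<in>V. hh x * S.Ek phi x)" by simp
  also have "\<dots> = (\<Sum>x\<in>V. S.Ek hh x * phi x)" by (simp add: S.Ek_selfadj)
  also have "\<dots> = 0" by (simp add: Ek_hh)
  finally show ?thesis .
qed

lemma T_F1F1F1: "S.TrH F1 F1 F1 = real (card H) * (\<Sum>x\<in>V. F1 x ^ 3)"
  unfolding S.TrH_def by (simp add: F1_inv F1_inv2 sum_distrib_left power3_eq_cube)

lemma T_hF1F1: "S.TrH hh F1 F1 = 0"
proof -
  have "S.TrH hh F1 F1 = real (card H) * (\<Sum>x\<in>V. hh x * (F1 x * F1 x))"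
    unfolding S.TrH_def by (simp add: F1_inv F1_inv2 sum_distrib_left mult_ac)
  also have "(\<Sum>x\<in>V. hh x * (F1 x * F1 x)) = 0" by (rule hh_orth) (simp add: F1_inv)
  finally show ?thesis by simp
qed

lemma T_F1hF1: "S.TrH F1 hh F1 = 0"
  by (simp add: S.TrH_const_13[OF F1_inv] sum_hh)

lemma T_F1F1h: "S.TrH F1 F1 hh = 0"
  by (simp add: S.TrH_const_12[OF F1_inv] sum_hh2)

lemma T_hhF1: "S.TrH hh hh F1 = 0"
  by (simp add: S.TrH_const_13[OF F1_inv] sum_hh)

lemma T_hF1h: "S.TrH hh F1 hh = 0"
  by (simp add: S.TrH_const_12[OF F1_inv] sum_hh2)

lemma T_F1hh: "S.TrH F1 hh hh = 0"
proof -
  have "S.TrH F1 hh hh = (\<Sum>d\<in>H. \<Sum>x\<in>V. F1 (vadd p x d) * hh (vadd p x d) * hh (vadd p (vadd p x d) d))"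
    unfolding S.TrH_def
    by (subst sum.swap) (rule sum.cong[OF refl], rule sum.cong[OF refl],
        simp add: F1_inv vsmult2_eq vadd_assoc S.H_mem)
  also have "\<dots> = (\<Sum>d\<in>H. \<Sum>y\<in>V. F1 y * hh y * hh (vadd p y d))"
    by (rule sum.cong[OF refl]) (rule sum_shift[OF p_pos], erule S.H_mem)
  also have "\<dots> = (\<Sum>y\<in>V. F1 y * hh y * (\<Sum>d\<in>H. hh (vadd p y d)))"
    by (subst sum.swap) (simp add: sum_distrib_left)
  also have "\<dots> = 0" by (simp add: sum_hh)
  finally show ?thesis .
qed

lemma T_hhh: "S.TrH hh hh hh \<ge> - (real (card H) * (\<Sum>x\<in>V. (hh x)^2))"
proof -
  have pt: "- ((hh x)^2 / 2) - (hh (vadd p x d))^2 / 2 \<le> hh x * hh (vadd p x d) * hh (vadd p x (vsmult p 2 d))" for x d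
  proof -
    have "\<bar>hh x * hh (vadd p x d) * hh (vadd p x (vsmult p 2 d))\<bar> \<le> \<bar>hh x * hh (vadd p x d)\<bar>"
      using hh_1[of "vadd p x (vsmult p 2 d)"] by (simp add: abs_mult mult_left_le)
    moreover have "\<bar>hh x * hh (vadd p x d)\<bar> \<le> ((hh x)^2 + (hh (vadd p x d))^2) / 2"
    proof -
      have "0 \<le> (\<bar>hh x\<bar> - \<bar>hh (vadd p x d)\<bar>)^2" by simp
      then show ?thesis by (simp add: abs_mult power2_eq_square algebra_simps)
    qed
    ultimately have "\<bar>hh x * hh (vadd p x d) * hh (vadd p x (vsmult p 2 d))\<bar> \<le> ((hh x)^2 + (hh (vadd p x d))^2) / 2"
      by linarith
    then have "- (hh x * hh (vadd p x d) * hh (vadd p x (vsmult p 2 d))) \<le> ((hh x)^2 + (hh (vadd p x d))^2) / 2"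
      by (simp add: abs_le_iff)
    then show ?thesis by (rule lin_aux)
  qed
  have "(\<Sum>x\<in>V. \<Sum>d\<in>H. - ((hh x)^2 / 2) - (hh (vadd p x d))^2 / 2) \<le> S.TrH hh hh hh"
    unfolding S.TrH_def by (intro sum_mono pt)
  moreover have "(\<Sum>x\<in>V. \<Sum>d\<in>H. - ((hh x)^2 / 2) - (hh (vadd p x d))^2 / 2)
     = - (\<Sum>x\<in>V. \<Sum>d\<in>H. (hh x)^2 / 2) - (\<Sum>x\<in>V. \<Sum>d\<in>H. (hh (vadd p x d))^2 / 2)"
    by (simp add: sum_subtractf sum_negf)
  moreover have "(\<Sum>x\<in>V. \<Sum>d\<in>H. (hh (vadd p x d))^2 / 2) = (\<Sum>d\<in>H. \<Sum>x\<in>V. (hh x)^2 / 2)"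
    by (subst sum.swap) (rule sum.cong[OF refl], rule sum_shift[OF p_pos], erule S.H_mem)
  moreover have "(\<Sum>d\<in>H. \<Sum>x\<in>V. (hh x)^2 / 2) = real (card H) * (\<Sum>x\<in>V. (hh x)^2) / 2"
    by (simp add: sum_divide_distrib[symmetric])
  moreover have "(\<Sum>x\<in>V. \<Sum>d\<in>H. (hh x)^2 / 2) = real (card H) * (\<Sum>x\<in>V. (hh x)^2) / 2"
    by (simp add: sum_divide_distrib[symmetric] sum_distrib_left)
  ultimately show ?thesis by linarith
qed

end



context subsp begin

lemma Ek_sum: "(\<Sum>x\<in>V. Ek f x) = (\<Sum>x\<in>V. f x)"
  using Ek_selfadj[of f "\<lambda>_. 1"] by simp

end

context decomp begin

lemma a_split: "a = (\<lambda>x. F2 x + gg x)" by (simp add: gg_def)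
lemma F2_split: "F2 = (\<lambda>x. F1 x + hh x)" by (simp add: hh_def)

lemma key_ineq:
  assumes small: "\<forall>z\<in>V. cmod (fh (\<lambda>x. complex_of_real (gg x)) z) \<le> eta"
  shows "S.TrH a a a \<ge> real (card H) * (\<Sum>x\<in>V. F1 x ^ 3) - real (card H) * (\<Sum>x\<in>V. (hh x)^2) - 7 * (real N ^ 2 * eta)"
proof -
  let ?B = "real N ^ 2 * eta"
  have b: "\<bar>S.TrH u v w\<bar> \<le> ?B"
    if "u = gg \<or> u = F2" "v = gg \<or> v = F2" "w = gg \<or> w = F2" "u = gg \<or> v = gg \<or> w = gg" for u v w
  proof (rule S.TrH_real_bound)
    show "\<bar>u x\<bar> \<le> 1" "\<bar>v x\<bar> \<le> 1" "\<bar>w x\<bar> \<le> 1" for x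
      using that gg_1 F2_1 by auto
    show "(\<forall>z\<in>V. cmod (fh (\<lambda>x. complex_of_real (u x)) z) \<le> eta) \<or>
          (\<forall>z\<in>V. cmod (fh (\<lambda>x. complex_of_real (v x)) z) \<le> eta) \<or>
          (\<forall>z\<in>V. cmod (fh (\<lambda>x. complex_of_real (w x)) z) \<le> eta)"
      using that(4) small by auto
  qed
  have e1: "S.TrH a a a = S.TrH F2 F2 F2 + (S.TrH gg F2 F2 + S.TrH F2 gg F2 + S.TrH F2 F2 gg + S.TrH gg gg F2 + S.TrH gg F2 gg + S.TrH F2 gg gg + S.TrH gg gg gg)"
    by (rule S.TrH_expand8[of F2 gg, folded a_split])
  have e2: "(S.TrH gg F2 F2 + S.TrH F2 gg F2 + S.TrH F2 F2 gg + S.TrH gg gg F2 + S.TrH gg F2 gg + S.TrH F2 gg gg + S.TrH gg gg gg) \<ge> - 7 * ?B"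
    using b[of gg F2 F2] b[of F2 gg F2] b[of F2 F2 gg] b[of gg gg F2] b[of gg F2 gg] b[of F2 gg gg] b[of gg gg gg]
    by (simp add: abs_le_iff)
  have e3: "S.TrH F2 F2 F2 = S.TrH F1 F1 F1 + (S.TrH hh F1 F1 + S.TrH F1 hh F1 + S.TrH F1 F1 hh + S.TrH hh hh F1 + S.TrH hh F1 hh + S.TrH F1 hh hh + S.TrH hh hh hh)"
    by (rule S.TrH_expand8[of F1 hh, folded F2_split])
  have e4: "S.TrH F2 F2 F2 \<ge> real (card H) * (\<Sum>x\<in>V. F1 x ^ 3) - real (card H) * (\<Sum>x\<in>V. (hh x)^2)"
    using e3 T_F1F1F1 T_hF1F1 T_F1hF1 T_F1F1h T_hhF1 T_hF1h T_F1hh T_hhh by simp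
  show ?thesis using e1 e2 e4 by linarith
qed

lemma hh_sq: "(\<Sum>x\<in>V. (hh x)^2) = (\<Sum>x\<in>V. (F2 x)^2) - (\<Sum>x\<in>V. (F1 x)^2)"
proof -
  have o: "(\<Sum>x\<in>V. hh x * F1 x) = 0" by (rule hh_orth) (simp add: F1_inv)
  have "(\<Sum>x\<in>V. (hh x)^2) = (\<Sum>x\<in>V. hh x * F2 x) - (\<Sum>x\<in>V. hh x * F1 x)"
    by (simp add: power2_eq_square sum_subtractf[symmetric] hh_def algebra_simps)
  moreover have "(\<Sum>x\<in>V. (F2 x)^2) - (\<Sum>x\<in>V. (F1 x)^2) = (\<Sum>x\<in>V. hh x * F2 x) + (\<Sum>x\<in>V. hh x * F1 x)"
    by (simp add: power2_eq_square sum_subtractf[symmetric] sum.distrib[symmetric] hh_def algebra_simps)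
  ultimately show ?thesis using o by simp
qed

end

definition annih :: "nat \<Rightarrow> nat \<Rightarrow> (nat \<Rightarrow> nat) set \<Rightarrow> (nat \<Rightarrow> nat) set" where
  "annih p n X = {x \<in> Fpn p n. \<forall>u\<in>X. p dvd dotp n u x}"

context setting begin

lemma dotp_vadd_cong: "[dotp n u (vadd p x y) = dotp n u x + dotp n u y] (mod p)"
  unfolding dotp_def sum.distrib[symmetric] distrib_left[symmetric]
  by (rule cong_sum, rule cong_scalar_left, rule vadd_cong)

lemma dotp_vsmult_cong: "[dotp n u (vsmult p c x) = c * dotp n u x] (mod p)"
  unfolding dotp_def sum_distrib_left
  by (rule cong_sum) (metis cong_scalar_left mult.assoc mult.left_commute vsmult_cong)

lemma dotp_vzero: "dotp n u vzero = 0" by (simp add: dotp_def vzero_def)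

lemma inter_annih_sub:
  assumes "linear_subspace p n K"
  shows "linear_subspace p n (K \<inter> annih p n X)"
proof -
  have dvd_add: "p dvd dotp n u (vadd p x y)" if "p dvd dotp n u x" "p dvd dotp n u y" for u x y
    using dotp_vadd_cong[of u x y] that by (metis cong_dvd_iff cong_sym dvd_add)
  have dvd_sm: "p dvd dotp n u (vsmult p c x)" if "p dvd dotp n u x" for u x c
    using dotp_vsmult_cong[of u c x] that by (metis cong_dvd_iff cong_sym dvd_mult)
  show ?thesis using assms
    unfolding linear_subspace_def annih_def
    by (auto simp: dvd_add dvd_sm dotp_vzero)
qed

lemma chi_annih: "u \<in> X \<Longrightarrow> h \<in> annih p n X \<Longrightarrow> chi u h = 1"
  unfolding annih_def chi_def using ee_1_iff[OF one_le_p] by auto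

lemma card_inter_annih1:
  assumes K: "linear_subspace p n K"
  shows "card K \<le> p * card (K \<inter> annih p n {u})"
proof -
  interpret KK: subsp p n K using K by unfold_locales
  interpret K2: subsp p n "K \<inter> annih p n {u}" using inter_annih_sub[OF K] by unfold_locales
  define F where "F t = {x \<in> K. dotp n u x mod p = t}" for t
  have cov: "K \<subseteq> (\<Union>t<p. F t)" unfolding F_def using p_pos by auto
  have cF: "card (F t) \<le> card (K \<inter> annih p n {u})" for t
  proof (cases "F t = {}")
    case True then show ?thesis by simp
  next
    case False
    then obtain x0 where x0: "x0 \<in> F t" by blast
    have "inj_on (\<lambda>y. vadd p y (vneg p x0)) (F t)"
      by (rule inj_onI) (auto simp: F_def dest: KK.H_mem intro: vadd_inj)
    moreover have "(\<lambda>y. vadd p y (vneg p x0)) ` F t \<subseteq> K \<inter> annih p n {u}"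
    proof
      fix z assume "z \<in> (\<lambda>y. vadd p y (vneg p x0)) ` F t"
      then obtain y where y: "y \<in> F t" "z = vadd p y (vneg p x0)" by blast
      have yK: "y \<in> K" "x0 \<in> K" using y x0 by (auto simp: F_def)
      have zK: "z \<in> K" using y yK by simp
      have "[dotp n u z = dotp n u y + (p - 1) * dotp n u x0] (mod p)"
        using dotp_vadd_cong[of u y "vneg p x0"] dotp_vsmult_cong[of u "p - 1" x0] y(2)
        unfolding vneg_def by (metis cong_add cong_refl cong_trans)
      moreover have "[dotp n u y = dotp n u x0] (mod p)" using y x0 by (simp add: F_def cong_def)
      ultimately have "[dotp n u z = 0] (mod p)"
        using cong_neg_iff[of "dotp n u y" "dotp n u x0"] by (metis cong_trans)
      then show "z \<in> K \<inter> annih p n {u}" using zK KK.H_mem[OF zK] by (simp add: annih_def cong_0_iff)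
    qed
    ultimately show ?thesis by (meson K2.H_fin card_inj_on_le)
  qed
  have "card K \<le> card (\<Union>t<p. F t)" by (rule card_mono) (auto simp: F_def intro: cov)
  also have "\<dots> \<le> (\<Sum>t<p. card (F t))" by (rule card_UN_le) simp
  also have "\<dots> \<le> (\<Sum>t<p. card (K \<inter> annih p n {u}))" by (rule sum_mono) (rule cF)
  finally show ?thesis by simp
qed

lemma annih_insert: "annih p n (insert u X) = annih p n X \<inter> annih p n {u}"
  by (auto simp: annih_def)

lemma card_inter_annih:
  assumes K: "linear_subspace p n K" and X: "finite X"
  shows "card K \<le> p ^ card X * card (K \<inter> annih p n X)"
  using X
proof (induction X rule: finite_induct)
  case empty
  have "K \<inter> annih p n {} = K" using K by (auto simp: annih_def linear_subspace_def)
  then show ?case by simp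
next
  case (insert u X)
  have "card K \<le> p ^ card X * card (K \<inter> annih p n X)" by (rule insert.IH)
  also have "card (K \<inter> annih p n X) \<le> p * card ((K \<inter> annih p n X) \<inter> annih p n {u})"
    by (rule card_inter_annih1[OF inter_annih_sub[OF K]])
  also have "(K \<inter> annih p n X) \<inter> annih p n {u} = K \<inter> annih p n (insert u X)"
    by (auto simp: annih_def)
  finally show ?case using insert by (simp add: mult_ac)
qed

end



fun Lseq :: "nat \<Rightarrow> real \<Rightarrow> nat \<Rightarrow> real" where
  "Lseq p e 0 = e"
| "Lseq p e (Suc j) = Lseq p e j / real p ^ nat \<lceil>1 / (e ^ 3 * Lseq p e j / 14)^2\<rceil>"

definition etaq :: "nat \<Rightarrow> real \<Rightarrow> nat \<Rightarrow> real" where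
  "etaq p e j = e ^ 3 * Lseq p e j / 14"

lemma Lseq_pos: "0 < p \<Longrightarrow> 0 < e \<Longrightarrow> 0 < Lseq p e j"
  by (induction j) auto

lemma div_le1: "0 \<le> (a::real) \<Longrightarrow> 1 \<le> b \<Longrightarrow> a / b \<le> a"
  using divide_left_mono[of 1 b a] by simp

lemma Lseq_Suc_le: "0 < p \<Longrightarrow> 0 < e \<Longrightarrow> Lseq p e (Suc j) \<le> Lseq p e j"
proof -
  assume p: "0 < p" and e: "0 < e"
  have "1 \<le> real p ^ nat \<lceil>1 / (e ^ 3 * Lseq p e j / 14)^2\<rceil>" using p by (simp add: one_le_power)
  then show ?thesis using Lseq_pos[OF p e, of j] by (simp add: div_le1)
qed

lemma Lseq_anti: "0 < p \<Longrightarrow> 0 < e \<Longrightarrow> j \<le> k \<Longrightarrow> Lseq p e k \<le> Lseq p e j"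
proof (induction k)
  case 0 then show ?case by simp
next
  case (Suc k)
  show ?case
  proof (cases "j \<le> k")
    case True
    then show ?thesis using order_trans[OF Lseq_Suc_le[OF Suc.prems(1,2)] Suc.IH[OF Suc.prems(1,2) True]] by simp
  next
    case False
    then have "j = Suc k" using Suc.prems(3) by simp
    then show ?thesis by simp
  qed
qed

lemma cubic_pt:
  fixes t al :: real
  assumes "0 \<le> t" "0 \<le> al"
  shows "al ^ 3 + 3 * al ^ 2 * (t - al) + 2 * al * (t - al)^2 \<le> t ^ 3"
proof -
  have "t ^ 3 - (al ^ 3 + 3 * al ^ 2 * (t - al) + 2 * al * (t - al)^2) = t * (t - al)^2"
    by (simp add: power2_eq_square power3_eq_cube algebra_simps)
  moreover have "0 \<le> t * (t - al)^2" using assms by simp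
  ultimately show ?thesis by linarith
qed

context setting begin

lemma fh_diff: "fh (\<lambda>x. f x - g x) z = fh f z - fh g z"
  unfolding fh_def by (simp add: sum_subtractf ring_distribs diff_divide_distrib)

end




context setting begin

lemma core:
  fixes e :: real and M :: nat
  assumes e: "0 < e" and A: "A \<subseteq> V" and M: "1 < real M * e ^ 3 / 2"
      and R: "propR p n (e ^ 3 * Lseq p e M / 2) A"
  shows "propP p n e A"
proof (rule ccontr)
  assume nP: "\<not> propP p n e A"
  then obtain S where Saff: "affine_subspace p n S"
    and dev: "\<not> \<bar>real (card (A \<inter> S)) - real (card A) * real (card S) / real N\<bar> \<le> e * real N"
    unfolding propP_def by blast
  from Saff obtain a0 H0 where a0: "a0 \<in> V" and H0: "linear_subspace p n H0" and Sdef: "S = vadd p a0 ` H0"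
    unfolding affine_subspace_def by blast
  have subsp_iff: "subsp p n H \<longleftrightarrow> linear_subspace p n H" for H
    by (simp add: subsp_def subsp_axioms_def setting_axioms)
  interpret H0s: subsp p n H0 using H0 subsp_iff by blast
  define a where "a = (\<lambda>x. of_bool (x \<in> A) :: real)"
  have a01: "0 \<le> a x" "a x \<le> 1" for x by (simp_all add: a_def)
  define NN where "NN = real N"
  have NN: "0 < NN" by (simp add: NN_def)
  define al where "al = real (card A) / NN"
  have cardA: "card A \<le> N" using card_mono[OF finite_Fpn A] by simp
  have al0: "0 \<le> al" and al1: "al \<le> 1" using cardA NN by (simp_all add: al_def NN_def)
  have cardA_al: "real (card A) = al * NN" using NN by (simp add: al_def)
  have sum_a: "(\<Sum>x\<in>V. a x) = real (card A)"
  proof -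
    have "(\<Sum>x\<in>V. a x) = real (card (V \<inter> {x. x \<in> A}))" unfolding a_def by (rule sum_of_bool_eq) simp_all
    also have "V \<inter> {x. x \<in> A} = A" using A by blast
    finally show ?thesis .
  qed
  have injS: "inj_on (vadd p a0) H0"
    by (rule inj_onI) (metis H0s.H_mem vadd_comm vadd_inj)
  have cS: "card S = card H0" unfolding Sdef by (rule card_image[OF injS])
  have SV: "S \<subseteq> V" unfolding Sdef using a0 H0s.H_mem by auto
  have cSN: "card S \<le> N" using card_mono[OF finite_Fpn SV] by simp
  define c where "c = real (card (A \<inter> S))"
  define m where "m = real (card S)"
  have m_pos: "0 < m" using H0s.H_card_pos cS by (simp add: m_def)
  have c0: "0 \<le> c" by (simp add: c_def)
  have finS: "finite S" by (rule finite_subset[OF SV finite_Fpn])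
  have cm: "c \<le> m" unfolding c_def m_def using card_mono[OF finS Int_lower2, of A] by simp
  have mN: "m \<le> NN" using cSN by (simp add: m_def NN_def)
  have dev': "e * NN < \<bar>c - al * m\<bar>"
    using dev by (simp add: c_def m_def al_def NN_def)
  have Sbig: "e * NN < m"
  proof -
    have "\<bar>c - al * m\<bar> \<le> m"
    proof -
      have "al * m \<le> m" using mult_left_le_one_le[of m al] al0 al1 m_pos by simp
      moreover have "0 \<le> al * m" using al0 m_pos by simp
      ultimately show ?thesis using c0 cm unfolding abs_le_iff by linarith
    qed
    then show ?thesis using dev' by linarith
  qed
  have al_gt: "e < al"
  proof (cases "c - al * m \<ge> 0")
    case True
    moreover have "0 \<le> al * m" using al0 m_pos by simp
    ultimately have "e * NN < c" using dev' by linarith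
    moreover have "c \<le> real (card A)" unfolding c_def
      using card_mono[OF finite_subset[OF A finite_Fpn] Int_lower1, of S] by simp
    ultimately have "e * NN < al * NN" using cardA_al by linarith
    then show ?thesis using NN by simp
  next
    case False
    then have "\<bar>c - al * m\<bar> = al * m - c" by simp
    then have "e * NN < al * m" using dev' c0 by linarith
    also have "al * m \<le> al * NN" using mN al0 by (simp add: mult_left_mono)
    finally show ?thesis using NN by simp
  qed
  define Sp where "Sp j = {z \<in> V. etaq p e j \<le> cmod (fh (\<lambda>x. complex_of_real (a x)) z)}" for j
  define K where "K = rec_nat H0 (\<lambda>j Kj. Kj \<inter> annih p n (Sp j))"
  have K0: "K 0 = H0" and KS: "K (Suc j) = K j \<inter> annih p n (Sp j)" for j by (simp_all add: K_def)
  have Klin: "linear_subspace p n (K j)" for j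
    by (induction j) (simp_all add: K0 KS H0 inter_annih_sub)
  have Kmono: "K (Suc j) \<subseteq> K j" for j by (simp add: KS)
  have sub_j: "subsp p n (K j)" for j using Klin subsp_iff by blast
  have dec_j: "decomp p n (K j) (K (Suc j)) a" for j
    by (simp add: decomp_def decomp_axioms_def two_subsp_def two_subsp_axioms_def setting_axioms Klin Kmono a01)
  define F where "F j x = (\<Sum>h\<in>K j. a (vadd p x h)) / real (card (K j))" for j x
  have F_Ek: "subsp.Ek p (K j) a = F j" for j
    by (rule ext) (simp add: subsp.Ek_def[OF sub_j] F_def)
  define En where "En j = (\<Sum>x\<in>V. (F j x)^2)" for j
  have F01: "0 \<le> F j x" "F j x \<le> 1" for j x
    using subsp.Ek_bounds[OF sub_j[of j], where f = a] a01 F_Ek by auto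
  have En_mono: "En j \<le> En (Suc j)" for j
  proof -
    interpret D: decomp p n "K j" "K (Suc j)" a by (rule dec_j)
    have "D.F1 = F j" unfolding D.F1_def using F_Ek by simp
    moreover have "D.F2 = F (Suc j)" unfolding D.F2_def using F_Ek by simp
    moreover have "0 \<le> (\<Sum>x\<in>V. (D.hh x)^2)" by (simp add: sum_nonneg)
    ultimately show ?thesis using D.hh_sq by (simp add: En_def)
  qed
  have En_le: "En j \<le> NN" for j
  proof -
    have "En j \<le> (\<Sum>x\<in>V. 1)" unfolding En_def by (rule sum_mono) (use F01 in \<open>simp add: power_le_one\<close>)
    then show ?thesis by (simp add: NN_def)
  qed
  have En_ge: "0 \<le> En j" for j by (simp add: En_def sum_nonneg)
  have Fsum: "(\<Sum>x\<in>V. F j x) = real (card A)" for j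
    using subsp.Ek_sum[OF sub_j[of j], where f = a] F_Ek sum_a by simp
  have Var: "(\<Sum>x\<in>V. (F j x - al)^2) = En j - NN * al^2" for j
  proof -
    have "(\<Sum>x\<in>V. (F j x - al)^2) = (\<Sum>x\<in>V. (F j x)^2) - 2 * al * (\<Sum>x\<in>V. F j x) + NN * al^2"
      by (simp add: power2_diff sum.distrib sum_subtractf sum_distrib_left NN_def algebra_simps)
    then show ?thesis using Fsum cardA_al by (simp add: En_def power2_eq_square)
  qed
  have FS: "F 0 x = c / m" if x: "x \<in> S" for x
  proof -
    obtain h1 where h1: "h1 \<in> H0" and xe: "x = vadd p a0 h1" using x Sdef by blast
    have "(\<Sum>h\<in>H0. a (vadd p x h)) = (\<Sum>h\<in>H0. a (vadd p a0 (vadd p h1 h)))"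
      by (simp add: xe vadd_assoc)
    also have "\<dots> = (\<Sum>h\<in>H0. a (vadd p a0 h))" by (rule H0s.sumH_shift[OF h1])
    also have "\<dots> = (\<Sum>s\<in>S. a s)" unfolding Sdef by (rule sum.reindex[OF injS, symmetric, unfolded comp_def])
    also have "\<dots> = real (card (S \<inter> {x. x \<in> A}))" unfolding a_def by (rule sum_of_bool_eq) (simp_all add: finS)
    also have "S \<inter> {x. x \<in> A} = A \<inter> S" by blast
    finally show ?thesis by (simp add: F_def K0 c_def m_def cS)
  qed
  have Var0: "e^2 * NN \<le> (\<Sum>x\<in>V. (F 0 x - al)^2)"
  proof -
    have "(\<Sum>x\<in>S. (F 0 x - al)^2) \<le> (\<Sum>x\<in>V. (F 0 x - al)^2)"
      by (rule sum_mono2[OF finite_Fpn SV]) simp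
    moreover have "(\<Sum>x\<in>S. (F 0 x - al)^2) = m * (c / m - al)^2"
      by (simp add: FS m_def)
    moreover have "m * (c / m - al)^2 = (c - al * m)^2 / m"
      using m_pos by (simp add: power2_eq_square field_simps)
    moreover have "(e * NN)^2 \<le> (c - al * m)^2"
    proof -
      have "(e * NN)^2 \<le> \<bar>c - al * m\<bar>^2" using dev' e NN by (intro power_mono) simp_all
      then show ?thesis by simp
    qed
    moreover have "(e * NN)^2 / NN \<le> (c - al * m)^2 / m"
    proof -
      have "(e * NN)^2 / NN \<le> (e * NN)^2 / m" using m_pos mN by (intro divide_left_mono) simp_all
      also have "\<dots> \<le> (c - al * m)^2 / m" using m_pos \<open>(e * NN)^2 \<le> (c - al * m)^2\<close> by (simp add: divide_right_mono)
      finally show ?thesis .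
    qed
    moreover have "(e * NN)^2 / NN = e^2 * NN" using NN by (simp add: power2_eq_square)
    ultimately show ?thesis by linarith
  qed
  have Varj: "e^2 * NN \<le> (\<Sum>x\<in>V. (F j x - al)^2)" for j
  proof -
    have "En 0 \<le> En j" by (rule lift_Suc_mono_le[of En, OF En_mono]) simp
    then show ?thesis using Var0 Var[of 0] Var[of j] by linarith
  qed
  have eta_pos: "0 < etaq p e j" for j using Lseq_pos[OF p_pos e] e by (simp add: etaq_def)
  define sj where "sj j = nat \<lceil>1 / (etaq p e j)^2\<rceil>" for j
  have SpV: "Sp j \<subseteq> V" for j by (auto simp: Sp_def)
  have finSp: "finite (Sp j)" for j by (rule finite_subset[OF SpV finite_Fpn])
  have cardSp: "card (Sp j) \<le> sj j" for j
  proof -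
    let ?f = "fh (\<lambda>x. complex_of_real (a x))"
    have "real (card (Sp j)) * (etaq p e j)^2 = (\<Sum>z\<in>Sp j. (etaq p e j)^2)" by simp
    also have "\<dots> \<le> (\<Sum>z\<in>Sp j. (cmod (?f z))^2)"
      by (rule sum_mono) (use eta_pos[of j] in \<open>auto simp: Sp_def intro!: power_mono\<close>)
    also have "\<dots> \<le> (\<Sum>z\<in>V. (cmod (?f z))^2)" by (rule sum_mono2[OF finite_Fpn SpV]) simp
    also have "\<dots> \<le> 1" by (rule parseval_le1) (use a01 in simp)
    finally have "real (card (Sp j)) * (etaq p e j)^2 \<le> 1" .
    then have "real (card (Sp j)) \<le> 1 / (etaq p e j)^2" using eta_pos[of j] by (simp add: field_simps)
    also have "\<dots> \<le> real_of_int \<lceil>1 / (etaq p e j)^2\<rceil>" by (rule le_of_int_ceiling)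
    finally have "int (card (Sp j)) \<le> \<lceil>1 / (etaq p e j)^2\<rceil>" by linarith
    then show ?thesis unfolding sj_def by linarith
  qed
  have cardK: "Lseq p e j * NN \<le> real (card (K j))" for j
  proof (induction j)
    case 0 then show ?case using Sbig cS by (simp add: K0 m_def)
  next
    case (Suc j)
    have "card (K j) \<le> p ^ card (Sp j) * card (K j \<inter> annih p n (Sp j))"
      by (rule card_inter_annih[OF Klin finSp])
    also have "\<dots> \<le> p ^ sj j * card (K (Suc j))"
      using power_increasing[OF cardSp[of j] one_le_p] by (simp add: KS)
    finally have "real (card (K j)) \<le> real p ^ sj j * real (card (K (Suc j)))"
      by (metis of_nat_le_iff of_nat_mult of_nat_power)
    then have "real (card (K j)) / real p ^ sj j \<le> real (card (K (Suc j)))"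
      using p_pos by (simp add: divide_le_eq mult.commute)
    moreover have "Lseq p e (Suc j) * NN \<le> real (card (K j)) / real p ^ sj j"
      using Suc.IH p_pos by (simp add: sj_def etaq_def divide_right_mono)
    ultimately show ?case by linarith
  qed
  have small: "\<forall>z\<in>V. cmod (fh (\<lambda>x. complex_of_real (a x - F (Suc j) x)) z) \<le> etaq p e j" for j
  proof
    fix z assume z: "z \<in> V"
    let ?a = "\<lambda>x. complex_of_real (a x)"
    have "fh (\<lambda>x. complex_of_real (a x - F (Suc j) x)) z = fh ?a z - fh (subsp.Ek p (K (Suc j)) ?a) z"
    proof -
      have "(\<lambda>x. complex_of_real (a x - F (Suc j) x)) = (\<lambda>x. ?a x - subsp.Ek p (K (Suc j)) ?a x)"
        using subsp.Ek_of_real[OF sub_j[of "Suc j"], where f = a] F_Ek[of "Suc j"] by (auto simp: fun_eq_iff)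
      then show ?thesis by (simp add: fh_diff)
    qed
    also have "\<dots> = fh ?a z - (if \<forall>h\<in>K (Suc j). chi z h = 1 then fh ?a z else 0)"
      by (simp add: subsp.fh_Ek[OF sub_j])
    finally have eq: "fh (\<lambda>x. complex_of_real (a x - F (Suc j) x)) z = fh ?a z - (if \<forall>h\<in>K (Suc j). chi z h = 1 then fh ?a z else 0)" .
    show "cmod (fh (\<lambda>x. complex_of_real (a x - F (Suc j) x)) z) \<le> etaq p e j"
    proof (cases "z \<in> Sp j")
      case True
      have "\<forall>h\<in>K (Suc j). chi z h = 1" using True chi_annih by (auto simp: KS)
      then show ?thesis unfolding eq using eta_pos[of j] by simp
    next
      case False
      then have lt: "cmod (fh ?a z) < etaq p e j" using z by (auto simp: Sp_def)
      show ?thesis unfolding eq using lt eta_pos[of j] by auto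
    qed
  qed
  obtain j where jM: "j < M" and jinc: "En (Suc j) - En j \<le> e^3 / 2 * NN"
  proof (rule ccontr)
    assume "\<not> thesis"
    then have H: "\<And>j. j < M \<Longrightarrow> e^3 / 2 * NN < En (Suc j) - En j" using that by (meson not_le)
    have I: "j \<le> M \<Longrightarrow> En 0 + real j * (e^3 / 2 * NN) \<le> En j" for j
    proof (induction j)
      case 0 then show ?case by simp
    next
      case (Suc j)
      then have "En 0 + real j * (e^3 / 2 * NN) \<le> En j" by simp
      moreover have "e^3 / 2 * NN < En (Suc j) - En j" using H Suc.prems by simp
      moreover have "real (Suc j) * (e^3 / 2 * NN) = real j * (e^3 / 2 * NN) + e^3 / 2 * NN"
        by (simp add: algebra_simps)
      ultimately show ?case by linarith
    qed
    have "En 0 + real M * (e^3 / 2 * NN) \<le> En M" using I by simp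
    moreover have "NN < real M * (e^3 / 2 * NN)"
    proof -
      have "1 * NN < (real M * e ^ 3 / 2) * NN" using M NN by (intro mult_strict_right_mono) simp_all
      then show ?thesis by simp
    qed
    ultimately show False using En_le[of M] En_ge[of 0] by linarith
  qed
  interpret D: decomp p n "K j" "K (Suc j)" a by (rule dec_j)
  have F1eq: "D.F1 = F j" unfolding D.F1_def using F_Ek by simp
  have F2eq: "D.F2 = F (Suc j)" unfolding D.F2_def using F_Ek by simp
  have ggeq: "D.gg = (\<lambda>x. a x - F (Suc j) x)" by (rule ext) (simp add: D.gg_def F2eq)
  define k where "k = real (card (K j))"
  define T where "T = D.S.TrH a a a"
  define C3 where "C3 = (\<Sum>x\<in>V. F j x ^ 3)"
  define V2 where "V2 = (\<Sum>x\<in>V. (F j x - al)^2)"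
  define Hs where "Hs = (\<Sum>x\<in>V. (D.hh x)^2)"
  define L where "L = Lseq p e j"
  define LM where "LM = Lseq p e M"
  have k0: "0 \<le> k" by (simp add: k_def)
  have key: "T \<ge> k * C3 - k * Hs - 7 * (NN^2 * etaq p e j)"
    using D.key_ineq[of "etaq p e j"] small[of j]
    unfolding T_def k_def C3_def Hs_def NN_def F1eq ggeq by simp
  have C3b: "C3 \<ge> NN * al^3 + 2 * al * V2"
  proof -
    have "(\<Sum>x\<in>V. al ^ 3 + 3 * al ^ 2 * (F j x - al) + 2 * al * (F j x - al)^2) \<le> C3"
      unfolding C3_def by (rule sum_mono, rule cubic_pt) (use F01 al0 in auto)
    moreover have "(\<Sum>x\<in>V. al ^ 3 + 3 * al ^ 2 * (F j x - al) + 2 * al * (F j x - al)^2)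
        = NN * al^3 + 3 * al^2 * ((\<Sum>x\<in>V. F j x) - NN * al) + 2 * al * V2"
      by (simp add: V2_def NN_def sum.distrib sum_distrib_left sum_subtractf algebra_simps)
    moreover have "(\<Sum>x\<in>V. F j x) - NN * al = 0" using Fsum cardA_al by simp
    ultimately show ?thesis by simp
  qed
  have V2b: "e^2 * NN \<le> V2" unfolding V2_def by (rule Varj)
  have a_: "2 * e * (e^2 * NN) \<le> 2 * al * V2"
    using V2b al_gt e NN by (intro mult_mono) simp_all
  have b_: "k * (NN * al^3 + 2 * e^3 * NN) \<le> k * C3"
  proof -
    have "NN * al^3 + 2 * e^3 * NN \<le> C3" using C3b a_ by (simp add: power3_eq_cube power2_eq_square algebra_simps)
    then show ?thesis using k0 by (rule mult_left_mono)
  qed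
  have Hsb: "Hs \<le> e^3 / 2 * NN"
    using jinc D.hh_sq unfolding Hs_def F1eq F2eq En_def by simp
  have c_: "k * Hs \<le> k * (e^3 / 2 * NN)" using Hsb k0 by (rule mult_left_mono)
  have LNk: "L * NN \<le> k" using cardK[of j] by (simp add: L_def k_def)
  have d_: "7 * (NN^2 * etaq p e j) \<le> e^3 / 2 * NN * k"
  proof -
    have "7 * (NN^2 * etaq p e j) = e^3 / 2 * NN * (L * NN)" by (simp add: etaq_def L_def power2_eq_square)
    also have "\<dots> \<le> e^3 / 2 * NN * k" using LNk e NN by (intro mult_left_mono) simp_all
    finally show ?thesis .
  qed
  have Tlow: "k * NN * al^3 + e^3 * NN * k \<le> T"
  proof -
    have "k * (NN * al^3 + 2 * e^3 * NN) - k * (e^3 / 2 * NN) - e^3 / 2 * NN * k = k * NN * al^3 + e^3 * NN * k"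
      by (simp add: algebra_simps)
    then show ?thesis using key b_ c_ d_ by linarith
  qed
  have Rj: "T \<le> real (card A) ^ 3 * k / NN^2 + (e ^ 3 * LM / 2) * NN^2"
  proof -
    have Teq: "T = (\<Sum>x\<in>V. \<Sum>d\<in>K j. of_bool (x \<in> A) * of_bool (vadd p x d \<in> A) * of_bool (vadd p x (vsmult p 2 d) \<in> A))"
      unfolding T_def subsp.TrH_def[OF sub_j] a_def by (rule refl)
    have R1: "(\<Sum>x\<in>V. \<Sum>d\<in>K j. of_bool (x \<in> A) * of_bool (vadd p x d \<in> A) * of_bool (vadd p x (vsmult p 2 d) \<in> A) :: real)
        \<le> real (card A) ^ 3 * real (card (K j)) / real (p ^ n) ^ 2 + e ^ 3 * Lseq p e M / 2 * real (p ^ n) ^ 2"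
      using R Klin[of j] unfolding propR_def by blast
    show ?thesis unfolding Teq k_def NN_def LM_def by (rule R1)
  qed
  have cube: "real (card A) ^ 3 * k / NN^2 = k * NN * al^3"
    using NN by (simp add: cardA_al power3_eq_cube power2_eq_square field_simps)
  have "e^3 * NN * k \<le> (e ^ 3 * LM / 2) * NN^2" using Tlow Rj cube by linarith
  then have "e^3 * NN * k \<le> e^3 * NN * (LM * NN / 2)" by (simp add: power2_eq_square algebra_simps)
  then have kle: "k \<le> LM * NN / 2" using e NN by (simp add: mult_le_cancel_left_pos)
  have LM_pos: "0 < LM" using Lseq_pos[OF p_pos e] by (simp add: LM_def)
  have "LM \<le> L" unfolding LM_def L_def using Lseq_anti[OF p_pos e, of j M] jM by simp
  then have "LM * NN \<le> L * NN" using NN by (simp add: mult_right_mono)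
  moreover have "0 < LM * NN" using LM_pos NN by simp
  ultimately show False using LNk kle by linarith
qed

end


theorem mainTheorem17:
  fixes p :: nat and \<epsilon> :: real
  assumes "prime p" and "odd p" and "\<epsilon> > 0"
  shows "\<exists>\<delta>>0. \<forall>n. \<forall>A. A \<subseteq> Fpn p n \<longrightarrow> propR p n \<delta> A \<longrightarrow> propP p n \<epsilon> A"
proof -
  define M where "M = nat \<lceil>2 / \<epsilon> ^ 3\<rceil> + 1"
  have p0: "0 < p" using assms(1) prime_gt_0_nat by blast
  have e3: "0 < \<epsilon> ^ 3" using assms(3) by simp
  have M: "1 < real M * \<epsilon> ^ 3 / 2"
  proof -
    have "2 / \<epsilon> ^ 3 < real M" unfolding M_def by linarith
    then have "2 / \<epsilon> ^ 3 * \<epsilon> ^ 3 < real M * \<epsilon> ^ 3" using e3 by (rule mult_strict_right_mono)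
    then show ?thesis using e3 by simp
  qed
  have d: "0 < \<epsilon> ^ 3 * Lseq p \<epsilon> M / 2" using Lseq_pos[OF p0 assms(3)] e3 by simp
  show ?thesis
  proof (intro exI[of _ "\<epsilon> ^ 3 * Lseq p \<epsilon> M / 2"] conjI allI impI d)
    fix n A assume A: "A \<subseteq> Fpn p n" and R: "propR p n (\<epsilon> ^ 3 * Lseq p \<epsilon> M / 2) A"
    interpret setting p n using assms(1,2) by unfold_locales
    show "propP p n \<epsilon> A" by (rule core[OF assms(3) A M R])
  qed
qed

end
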